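(* Let $T$ be a set of formulas in $i,n$ which axiomatizes two-valued (classical) propositional logic with condensed detachment as the sole rule of inference, i.e. the formulas provable from $T$ by condensed detachment are exactly the classical tautologies in $i,n$. Suppose that each of L1 $=i(i(x,y),i(i(y,z),i(x,z)))$, L2 $=i(i(n(x),x),x)$, L3 $=i(x,i(n(x),y))$ has a double-negation-free condensed-detachment proof from $T$. Then $T$ (with condensed detachment) admits strong double-negation elimination.
   Context: Formulas are terms built from propositional variables using the binary connective $i$ (implication) and the unary connective $n$ (negation). Condensed detachment: from a major premiss $i(A,B)$ and a minor premiss $C$, after renaming variables so that the two premisses share no variables, if $A$ and $C$ are unifiable with most general unifier $\sigma$, infer $B\sigma$. Alphabetic variants of axioms count as axioms, and conclusions may be renamed. A proof is a finite sequence of formulas each an axiom or obtained from earlier lines by the rule; deduced steps are the non-axiom lines. A formula contains a double negation if it has a (not necessarily proper) subformula of the form $n(n(t))$; a proof is double-negation free if none of its deduced steps contains a double negation. Given a formula $B$, a formula $B^*$ is obtained from $B$ by selecting some set of doubly negated subformulas $n(n(q))$ of $B$ and replacing all occurrences of each selected subformula by $q$. A system admits strong double-negation elimination if whenever it proves $B$ and $B^*$ is obtained from $B$ in this way, there is a proof of $B^*$ in the system in which every subformula of the form $n(n(t))$ of a deduced step occurs (up to renaming of variables) as a subformula of $B^*$. *)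

theory Defs
  imports Main
begin

datatype form = Var nat | I form form | N form

fun vars :: "form \<Rightarrow> nat set" where
  "vars (Var x) = {x}"
| "vars (I a b) = vars a \<union> vars b"
| "vars (N a) = vars a"

fun subst :: "(nat \<Rightarrow> form) \<Rightarrow> form \<Rightarrow> form" where
  "subst \<sigma> (Var x) = \<sigma> x"
| "subst \<sigma> (I a b) = I (subst \<sigma> a) (subst \<sigma> b)"
| "subst \<sigma> (N a) = N (subst \<sigma> a)"

fun rename :: "(nat \<Rightarrow> nat) \<Rightarrow> form \<Rightarrow> form" where
  "rename \<rho> (Var x) = Var (\<rho> x)"
| "rename \<rho> (I a b) = I (rename \<rho> a) (rename \<rho> b)"
| "rename \<rho> (N a) = N (rename \<rho> a)"

definition variant :: "form \<Rightarrow> form \<Rightarrow> bool" where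
  "variant s t \<longleftrightarrow> (\<exists>\<rho>. inj \<rho> \<and> t = rename \<rho> s)"

definition is_mgu :: "(nat \<Rightarrow> form) \<Rightarrow> form \<Rightarrow> form \<Rightarrow> bool" where
  "is_mgu \<sigma> a c \<longleftrightarrow> subst \<sigma> a = subst \<sigma> c \<and>
     (\<forall>\<tau>. subst \<tau> a = subst \<tau> c \<longrightarrow> (\<exists>\<rho>. \<forall>x. \<tau> x = subst \<rho> (\<sigma> x)))"

text \<open>Condensed detachment: from major premiss M and minor premiss C infer D.
  The minor premiss is renamed apart from the major one; the conclusion may be renamed.\<close>
definition cd :: "form \<Rightarrow> form \<Rightarrow> form \<Rightarrow> bool" where
  "cd M C D \<longleftrightarrow> (\<exists>A B C' \<sigma>. M = I A B \<and> variant C C' \<and> vars M \<inter> vars C' = {} \<and>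
      is_mgu \<sigma> A C' \<and> variant (subst \<sigma> B) D)"

definition is_axiom :: "form set \<Rightarrow> form \<Rightarrow> bool" where
  "is_axiom T A \<longleftrightarrow> (\<exists>a\<in>T. variant a A)"

definition is_proof :: "form set \<Rightarrow> form list \<Rightarrow> bool" where
  "is_proof T ps \<longleftrightarrow> (\<forall>i<length ps. is_axiom T (ps ! i) \<or>
      (\<exists>j<i. \<exists>k<i. cd (ps ! j) (ps ! k) (ps ! i)))"

definition proof_of :: "form set \<Rightarrow> form list \<Rightarrow> form \<Rightarrow> bool" where
  "proof_of T ps B \<longleftrightarrow> is_proof T ps \<and> ps \<noteq> [] \<and> last ps = B"

definition provable :: "form set \<Rightarrow> form \<Rightarrow> bool" where
  "provable T B \<longleftrightarrow> (\<exists>ps. proof_of T ps B)"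

definition deduced_steps :: "form set \<Rightarrow> form list \<Rightarrow> form set" where
  "deduced_steps T ps = {ps ! i | i. i < length ps \<and> \<not> is_axiom T (ps ! i)}"

fun subforms :: "form \<Rightarrow> form set" where
  "subforms (Var x) = {Var x}"
| "subforms (I a b) = insert (I a b) (subforms a \<union> subforms b)"
| "subforms (N a) = insert (N a) (subforms a)"

definition is_dn :: "form \<Rightarrow> bool" where
  "is_dn u \<longleftrightarrow> (\<exists>t. u = N (N t))"

definition has_dn :: "form \<Rightarrow> bool" where
  "has_dn A \<longleftrightarrow> (\<exists>u\<in>subforms A. is_dn u)"

definition dn_free_proof :: "form set \<Rightarrow> form list \<Rightarrow> bool" where
  "dn_free_proof T ps \<longleftrightarrow> (\<forall>A\<in>deduced_steps T ps. \<not> has_dn A)"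

fun dn_replace :: "form set \<Rightarrow> form \<Rightarrow> form" where
  "dn_replace S (Var x) = Var x"
| "dn_replace S (I a b) = I (dn_replace S a) (dn_replace S b)"
| "dn_replace S (N a) =
     (case a of N q \<Rightarrow> (if N (N q) \<in> S then dn_replace S q else N (N (dn_replace S q)))
              | _ \<Rightarrow> N (dn_replace S a))"

definition strong_dn_elim :: "form set \<Rightarrow> bool" where
  "strong_dn_elim T \<longleftrightarrow>
     (\<forall>B S. provable T B \<and> S \<subseteq> {u \<in> subforms B. is_dn u} \<longrightarrow>
        (\<exists>ps. proof_of T ps (dn_replace S B) \<and>
           (\<forall>A\<in>deduced_steps T ps. \<forall>u\<in>subforms A. is_dn u \<longrightarrow>
              (\<exists>w\<in>subforms (dn_replace S B). variant u w))))"

fun eval :: "(nat \<Rightarrow> bool) \<Rightarrow> form \<Rightarrow> bool" where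
  "eval v (Var x) = v x"
| "eval v (I a b) = (eval v a \<longrightarrow> eval v b)"
| "eval v (N a) = (\<not> eval v a)"

definition tautology :: "form \<Rightarrow> bool" where
  "tautology A \<longleftrightarrow> (\<forall>v. eval v A)"

definition L1 :: form where
  "L1 = I (I (Var 0) (Var 1)) (I (I (Var 1) (Var 2)) (I (Var 0) (Var 2)))"
definition L2 :: form where
  "L2 = I (I (N (Var 0)) (Var 0)) (Var 0)"
definition L3 :: form where
  "L3 = I (Var 0) (I (N (Var 0)) (Var 1))"

end

theory Submission
  imports Defs
begin


lemma finite_vars[simp]: "finite (vars t)" by (induct t) auto

lemma subst_cong: "(\<And>x. x \<in> vars t \<Longrightarrow> s1 x = s2 x) \<Longrightarrow> subst s1 t = subst s2 t"
  by (induct t) auto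

lemma subst_eq_vars: "subst s1 t = subst s2 t \<Longrightarrow> x \<in> vars t \<Longrightarrow> s1 x = s2 x"
  by (induct t) auto

lemma subst_Var[simp]: "subst Var t = t" by (induct t) auto

lemma subst_subst: "subst s2 (subst s1 t) = subst (\<lambda>x. subst s2 (s1 x)) t"
  by (induct t) auto

lemma rename_subst: "rename f t = subst (\<lambda>x. Var (f x)) t"
  by (induct t) auto

lemma vars_subst: "vars (subst s t) = (\<Union>x\<in>vars t. vars (s x))"
  by (induct t) auto

lemma vars_rename: "vars (rename f t) = f ` vars t"
  by (induct t) auto

lemma rename_rename: "rename g (rename f t) = rename (g \<circ> f) t"
  by (induct t) auto

lemma rename_cong: "(\<And>x. x \<in> vars t \<Longrightarrow> f x = g x) \<Longrightarrow> rename f t = rename g t"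
  by (induct t) auto

lemma rename_id[simp]: "rename (\<lambda>x. x) t = t" by (induct t) auto
lemma rename_id'[simp]: "rename id t = t" by (induct t) auto

lemma inj_extend:
  fixes f :: "nat \<Rightarrow> nat"
  assumes "finite X" "inj_on f X"
  shows "\<exists>g. inj g \<and> (\<forall>x\<in>X. g x = f x)"
proof -
  define M where "M = Max (insert 0 (f ` X))"
  have fin: "finite (insert 0 (f ` X))" using assms by auto
  have fM: "\<And>x. x \<in> X \<Longrightarrow> f x \<le> M" unfolding M_def using fin by (intro Max_ge) auto
  define g where "g x = (if x \<in> X then f x else M + 1 + x)" for x
  have "inj g"
  proof (rule injI)
    fix x y assume eq: "g x = g y"
    show "x = y"
    proof (cases "x \<in> X"; cases "y \<in> X")
      assume "x \<in> X" "y \<in> X" then show ?thesis using eq assms(2) unfolding g_def inj_on_def by auto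
    next
      assume "x \<in> X" "y \<notin> X" then have "g x \<le> M" "g y > M" using fM unfolding g_def by auto
      then show ?thesis using eq by auto
    next
      assume "x \<notin> X" "y \<in> X" then have "g y \<le> M" "g x > M" using fM unfolding g_def by auto
      then show ?thesis using eq by auto
    next
      assume "x \<notin> X" "y \<notin> X" then show ?thesis using eq unfolding g_def by auto
    qed
  qed
  then show ?thesis unfolding g_def by auto
qed

lemma variant_refl: "variant t t"
  unfolding variant_def by (rule exI[of _ "\<lambda>x. x"]) auto

lemma variant_trans: "variant s t \<Longrightarrow> variant t u \<Longrightarrow> variant s u"
  unfolding variant_def by (metis inj_compose rename_rename)

lemma variant_inj_on: "inj_on f (vars t) \<Longrightarrow> variant t (rename f t)"
proof -
  assume "inj_on f (vars t)"
  then obtain g where "inj g" "\<forall>x\<in>vars t. g x = f x" using inj_extend[of "vars t" f] by auto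
  then show ?thesis unfolding variant_def by (auto intro!: exI[of _ g] rename_cong)
qed

lemma variant_sym: "variant s t \<Longrightarrow> variant t s"
proof -
  assume "variant s t"
  then obtain f where f: "inj f" "t = rename f s" unfolding variant_def by auto
  have "rename (inv f) t = s" using f by (simp add: rename_rename)
  moreover have "inj_on (inv f) (vars t)" using f
    by (auto simp: vars_rename inj_on_def)
  ultimately show ?thesis using variant_inj_on by metis
qed


fun occ :: "nat \<Rightarrow> form \<Rightarrow> bool" where
  "occ x (Var y) = (x = y)" | "occ x (I a b) = (occ x a \<or> occ x b)" | "occ x (N a) = occ x a"

lemma occ_vars: "occ x t \<longleftrightarrow> x \<in> vars t" by (induct t) auto

definition scomp :: "(nat \<Rightarrow> form) \<Rightarrow> (nat \<Rightarrow> form) \<Rightarrow> nat \<Rightarrow> form" where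
  "scomp s1 s2 = (\<lambda>x. subst s2 (s1 x))"

lemma subst_scomp: "subst (scomp s1 s2) t = subst s2 (subst s1 t)"
  unfolding scomp_def by (simp add: subst_subst)

fun unif :: "nat \<Rightarrow> (form \<times> form) list \<Rightarrow> (nat \<Rightarrow> form) option" where
  "unif 0 es = None"
| "unif (Suc n) [] = Some Var"
| "unif (Suc n) ((Var x, t) # es) =
    (if t = Var x then unif n es
     else if occ x t then None
     else (case unif n (map (\<lambda>(a,b). (subst (Var(x:=t)) a, subst (Var(x:=t)) b)) es) of
             None \<Rightarrow> None | Some s \<Rightarrow> Some (scomp (Var(x:=t)) s)))"
| "unif (Suc n) ((I a b, Var x) # es) = unif n ((Var x, I a b) # es)"
| "unif (Suc n) ((N a, Var x) # es) = unif n ((Var x, N a) # es)"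
| "unif (Suc n) ((I a b, I c d) # es) = unif n ((a,c) # (b,d) # es)"
| "unif (Suc n) ((N a, N c) # es) = unif n ((a,c) # es)"
| "unif (Suc n) ((I a b, N c) # es) = None"
| "unif (Suc n) ((N a, I c d) # es) = None"

definition unifies :: "(nat \<Rightarrow> form) \<Rightarrow> (form \<times> form) list \<Rightarrow> bool" where
  "unifies s es \<longleftrightarrow> (\<forall>(a,b)\<in>set es. subst s a = subst s b)"

definition mgul :: "(nat \<Rightarrow> form) \<Rightarrow> (form \<times> form) list \<Rightarrow> bool" where
  "mgul s es \<longleftrightarrow> unifies s es \<and> (\<forall>\<tau>. unifies \<tau> es \<longrightarrow> (\<exists>\<rho>. \<forall>x. \<tau> x = subst \<rho> (s x)))"

lemma subst_elim_inv:
  assumes "\<tau> x = subst \<tau> t"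
  shows "subst \<tau> (subst (Var(x:=t)) u) = subst \<tau> u"
  using assms by (induct u) auto

lemma subst_no_occ': "x \<notin> vars u \<Longrightarrow> subst (Var(x:=t)) u = u"
  by (induct u) auto

lemma subst_no_occ: "x \<notin> vars t \<Longrightarrow> subst (Var(x:=t)) t = t"
  by (rule subst_no_occ')

lemma unif_sound: "unif n es = Some s \<Longrightarrow> mgul s es"
proof (induction n es arbitrary: s rule: unif.induct)
  case (2 n)
  then show ?case by (auto simp: mgul_def unifies_def intro: exI[of _ "\<tau>" for \<tau>])
next
  case (3 n x t es)
  show ?case
  proof (cases "t = Var x")
    case True
    then show ?thesis using 3 by (auto simp: mgul_def unifies_def)
  next
    case False
    let ?th = "Var(x:=t)"
    let ?es' = "map (\<lambda>(a,b). (subst ?th a, subst ?th b)) es"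
    from False 3(3) have nocc: "x \<notin> vars t" by (auto simp: occ_vars split: if_splits)
    from False 3(3) nocc obtain s' where s': "unif n ?es' = Some s'" and ss: "s = scomp ?th s'"
      by (auto simp: occ_vars split: option.splits)
    have m': "mgul s' ?es'" using 3(2)[OF False] nocc s' by (auto simp: occ_vars)
    have u1: "unifies s ((Var x, t) # es)"
      using m' nocc unfolding mgul_def unifies_def ss
      by (auto simp: subst_scomp subst_no_occ)
    have u2: "\<exists>\<rho>. \<forall>y. \<tau> y = subst \<rho> (s y)" if "unifies \<tau> ((Var x, t) # es)" for \<tau>
    proof -
      have tx: "\<tau> x = subst \<tau> t" using that by (auto simp: unifies_def)
      have "unifies \<tau> ?es'" using that subst_elim_inv[OF tx] by (auto simp: unifies_def)
      then obtain \<rho> where r: "\<forall>y. \<tau> y = subst \<rho> (s' y)" using m' unfolding mgul_def by auto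
      have "\<tau> = scomp s' \<rho>" using r unfolding scomp_def by auto
      show ?thesis
      proof (intro exI allI)
        fix y
        show "\<tau> y = subst \<rho> (s y)"
        proof (cases "y = x")
          case True
          then show ?thesis using tx `\<tau> = scomp s' \<rho>` unfolding ss scomp_def
            by (simp add: subst_subst)
        next
          case False
          then show ?thesis using r unfolding ss scomp_def by simp
        qed
      qed
    qed
    show ?thesis using u1 u2 unfolding mgul_def by blast
  qed
next
  case (4 n a b x es)
  have "unifies \<tau> ((I a b, Var x) # es) = unifies \<tau> ((Var x, I a b) # es)" for \<tau>
    by (auto simp: unifies_def)
  then show ?case using 4 unfolding mgul_def by auto
next
  case (5 n a x es)
  have "unifies \<tau> ((N a, Var x) # es) = unifies \<tau> ((Var x, N a) # es)" for \<tau>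
    by (auto simp: unifies_def)
  then show ?case using 5 unfolding mgul_def by auto
next
  case (6 n a b c d es)
  have "unifies \<tau> ((I a b, I c d) # es) = unifies \<tau> ((a,c) # (b,d) # es)" for \<tau>
    by (auto simp: unifies_def)
  then show ?case using 6 unfolding mgul_def by auto
next
  case (7 n a c es)
  have "unifies \<tau> ((N a, N c) # es) = unifies \<tau> ((a,c) # es)" for \<tau>
    by (auto simp: unifies_def)
  then show ?case using 7 unfolding mgul_def by auto
qed auto

definition unif' :: "nat \<Rightarrow> (form \<times> form) list \<Rightarrow> (nat \<Rightarrow> form) option" where
  "unif' n es = unif (Suc n) es"

lemma unif'_simps[simp]:
  "unif' n [] = Some Var"
  "unif' n ((Var x, t) # es) =
    (if t = Var x then unif n es
     else if occ x t then None
     else (case unif n (map (\<lambda>(a,b). (subst (Var(x:=t)) a, subst (Var(x:=t)) b)) es) of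
             None \<Rightarrow> None | Some s \<Rightarrow> Some (scomp (Var(x:=t)) s)))"
  "unif' n ((I a b, Var x) # es) = unif n ((Var x, I a b) # es)"
  "unif' n ((N a, Var x) # es) = unif n ((Var x, N a) # es)"
  "unif' n ((I a b, I c d) # es) = unif n ((a,c) # (b,d) # es)"
  "unif' n ((N a, N c) # es) = unif n ((a,c) # es)"
  "unif' n ((I a b, N c) # es) = None"
  "unif' n ((N a, I c d) # es) = None"
  by (simp_all only: unif'_def unif.simps)

lemma unif_num[simp]: "unif (numeral k) es = unif' (pred_numeral k) es"
  by (simp only: numeral_eq_Suc unif'_def)

fun maxv :: "form \<Rightarrow> nat" where
  "maxv (Var x) = x" | "maxv (I a b) = max (maxv a) (maxv b)" | "maxv (N a) = maxv a"

lemma maxv_ge: "x \<in> vars t \<Longrightarrow> x \<le> maxv t"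
  by (induct t) auto

fun vl :: "form \<Rightarrow> nat list" where
  "vl (Var x) = [x]" | "vl (I a b) = vl a @ vl b" | "vl (N a) = vl a"

fun fo :: "nat list \<Rightarrow> nat list \<Rightarrow> nat list" where
  "fo acc [] = acc"
| "fo acc (x # xs) = fo (if x \<in> set acc then acc else acc @ [x]) xs"

fun idx :: "nat list \<Rightarrow> nat \<Rightarrow> nat" where
  "idx [] x = 0"
| "idx (y # ys) x = (if x = y then 0 else Suc (idx ys x))"

lemma idx_lt: "x \<in> set l \<Longrightarrow> idx l x < length l"
  by (induct l) auto

lemma idx_nth: "x \<in> set l \<Longrightarrow> l ! idx l x = x"
  by (induct l) auto

definition nren :: "nat list \<Rightarrow> nat \<Rightarrow> nat" where
  "nren l x = (if x \<in> set l then idx l x else length l + x)"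

lemma inj_nren: "inj (nren l)"
proof (rule injI)
  fix x y assume eq: "nren l x = nren l y"
  show "x = y"
  proof (cases "x \<in> set l"; cases "y \<in> set l")
    assume "x \<in> set l" "y \<in> set l" then show ?thesis using eq idx_nth unfolding nren_def by metis
  next
    assume "x \<in> set l" "y \<notin> set l" then show ?thesis using eq idx_lt[of x l] unfolding nren_def by auto
  next
    assume "x \<notin> set l" "y \<in> set l" then show ?thesis using eq idx_lt[of y l] unfolding nren_def by auto
  next
    assume "x \<notin> set l" "y \<notin> set l" then show ?thesis using eq unfolding nren_def by auto
  qed
qed

definition norm :: "form \<Rightarrow> form" where
  "norm X = rename (nren (fo [] (vl X))) X"

lemma variant_norm: "variant X (norm X)"
  unfolding variant_def norm_def using inj_nren by blast

definition cdc :: "form \<Rightarrow> form \<Rightarrow> form option" where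
  "cdc M C = (case M of I A B \<Rightarrow>
      (case unif 100000 [(A, rename (\<lambda>x. x + (maxv M + 1)) C)] of
         Some s \<Rightarrow> Some (norm (subst s B)) | None \<Rightarrow> None)
    | _ \<Rightarrow> None)"

lemma mgul_is_mgu: "mgul s [(A, C)] \<Longrightarrow> is_mgu s A C"
  unfolding mgul_def is_mgu_def unifies_def by auto

lemma cdc_sound: "cdc M C = Some D \<Longrightarrow> cd M C D"
proof -
  assume h: "cdc M C = Some D"
  then obtain A B where M: "M = I A B" unfolding cdc_def by (cases M) auto
  let ?m = "maxv M + 1"
  let ?C' = "rename (\<lambda>x. x + ?m) C"
  from h M obtain s where s: "unif 100000 [(A, ?C')] = Some s" and D: "D = norm (subst s B)"
    unfolding cdc_def by (auto split: option.splits)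
  have "variant C ?C'" unfolding variant_def by (auto intro!: exI[of _ "\<lambda>x. x + ?m"] inj_onI)
  moreover have "vars M \<inter> vars ?C' = {}"
    by (auto simp: vars_rename dest: maxv_ge)
  moreover have "is_mgu s A ?C'" using unif_sound[OF s] by (rule mgul_is_mgu)
  moreover have "variant (subst s B) D" using D variant_norm by simp
  ultimately show ?thesis unfolding cd_def using M by blast
qed

fun hasdnb :: "form \<Rightarrow> bool" where
  "hasdnb (Var x) = False"
| "hasdnb (I a b) = (hasdnb a \<or> hasdnb b)"
| "hasdnb (N a) = ((case a of N _ \<Rightarrow> True | _ \<Rightarrow> False) \<or> hasdnb a)"

lemma hasdnb_iff: "hasdnb t \<longleftrightarrow> has_dn t"
  unfolding has_dn_def is_dn_def
  by (induct t) (auto split: form.splits)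


definition "F0 = I (I (Var 0) (Var 1)) (I (I (Var 1) (Var 2)) (I (Var 0) (Var 2)))"
definition "F1 = I (I (N (Var 0)) (Var 0)) (Var 0)"
definition "F2 = I (Var 0) (I (N (Var 0)) (Var 1))"
definition "F3 = I (I (I (N (Var 0)) (Var 1)) (Var 2)) (I (Var 0) (Var 2))"
definition "F4 = I (Var 0) (Var 0)"
definition "F5 = I (I (I (I (Var 0) (Var 1)) (I (Var 2) (Var 1))) (Var 3)) (I (I (Var 2) (Var 0)) (Var 3))"
definition "F6 = I (N (I (Var 0) (Var 0))) (Var 1)"
definition "F7 = I (I (Var 0) (Var 1)) (I (N (I (Var 2) (Var 2))) (Var 1))"
definition "F8 = I (Var 0) (I (N (I (Var 1) (Var 1))) (Var 2))"
definition "F9 = I (I (I (N (I (Var 0) (Var 0))) (Var 1)) (Var 2)) (I (Var 3) (Var 2))"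
definition "F10 = I (Var 0) (I (Var 1) (Var 1))"
definition "F11 = I (I (I (Var 0) (Var 0)) (Var 1)) (I (Var 2) (Var 1))"
definition "F12 = I (I (Var 0) (Var 1)) (I (I (N (Var 0)) (Var 0)) (Var 1))"
definition "F13 = I (Var 0) (I (I (N (Var 1)) (Var 1)) (Var 1))"
definition "F14 = I (I (I (I (N (Var 0)) (Var 0)) (Var 0)) (Var 1)) (I (Var 2) (Var 1))"
definition "F15 = I (I (Var 0) (I (N (Var 1)) (Var 1))) (I (Var 2) (I (Var 0) (Var 1)))"
definition "F16 = I (Var 0) (I (I (Var 1) (Var 2)) (I (N (Var 0)) (Var 2)))"
definition "F17 = I (I (I (I (Var 0) (Var 1)) (I (N (Var 2)) (Var 1))) (Var 3)) (I (Var 2) (Var 3))"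
definition "F18 = I (Var 0) (I (Var 1) (I (N (Var 0)) (Var 2)))"
definition "F19 = I (I (I (Var 0) (I (N (Var 1)) (Var 2))) (Var 3)) (I (Var 1) (Var 3))"
definition "F20 = I (Var 0) (I (Var 1) (I (Var 2) (Var 0)))"
definition "F21 = I (Var 0) (I (Var 1) (I (Var 2) (Var 1)))"
definition "F22 = I (Var 0) (I (Var 1) (Var 0))"
definition "F23 = I (I (I (Var 0) (Var 1)) (Var 2)) (I (Var 1) (Var 2))"
definition "F24 = I (Var 0) (I (I (I (I (N (Var 1)) (Var 1)) (Var 1)) (Var 2)) (Var 2))"
definition "F25 = I (I (I (I (N (Var 0)) (Var 0)) (Var 0)) (Var 1)) (Var 1)"
definition "F26 = I (I (Var 0) (I (N (Var 1)) (Var 1))) (I (Var 0) (Var 1))"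
definition "F27 = I (I (N (Var 0)) (Var 1)) (I (I (Var 1) (Var 0)) (Var 0))"
definition "F28 = I (Var 0) (I (I (Var 0) (Var 1)) (Var 1))"
definition "F29 = I (I (I (I (Var 0) (Var 1)) (Var 1)) (Var 2)) (I (Var 0) (Var 2))"
definition "F30 = I (I (Var 0) (Var 1)) (I (I (Var 2) (Var 0)) (I (Var 2) (Var 1)))"
definition "F31 = I (I (I (I (N (Var 0)) (Var 0)) (Var 1)) (Var 2)) (I (I (Var 0) (Var 1)) (Var 2))"
definition "F32 = I (I (Var 0) (I (Var 1) (Var 2))) (I (Var 1) (I (Var 0) (Var 2)))"
definition "F33 = I (N (Var 0)) (I (Var 0) (Var 1))"
definition "F34 = I (I (I (Var 0) (Var 1)) (Var 2)) (I (N (Var 0)) (Var 2))"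
definition "F35 = I (I (I (Var 0) (Var 1)) (Var 0)) (Var 0)"
definition "F36 = I (I (Var 0) (I (I (Var 1) (Var 2)) (Var 1))) (I (Var 0) (Var 1))"
definition "F37 = I (I (I (Var 0) (Var 1)) (Var 2)) (I (I (Var 2) (Var 0)) (Var 0))"
definition "F38 = I (I (Var 0) (Var 1)) (I (I (I (Var 1) (Var 2)) (Var 0)) (Var 1))"
definition "F39 = I (N (Var 0)) (I (I (I (Var 1) (Var 2)) (Var 0)) (Var 1))"
definition "F40 = I (I (I (Var 0) (Var 1)) (Var 2)) (I (N (Var 2)) (Var 0))"
definition "F41 = I (I (Var 0) (Var 1)) (I (N (Var 1)) (N (Var 0)))"
definition "F42 = I (Var 0) (I (N (Var 1)) (N (I (Var 0) (Var 1))))"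
definition "F43 = I (Var 0) (I (I (I (Var 1) (Var 2)) (N (Var 0))) (Var 1))"
definition "F44 = I (I (I (Var 0) (Var 1)) (N (Var 2))) (I (Var 2) (Var 0))"
definition "F45 = I (I (Var 0) (N (Var 1))) (I (Var 1) (N (Var 0)))"
definition "F46 = I (Var 0) (I (Var 1) (N (I (Var 0) (N (Var 1)))))"
definition "F47 = I (I (Var 0) (Var 1)) (I (I (I (Var 0) (Var 2)) (Var 1)) (Var 1))"
definition "F48 = I (I (I (Var 0) (Var 1)) (Var 2)) (I (I (Var 0) (Var 2)) (Var 2))"
definition "F49 = I (I (Var 0) (Var 1)) (I (I (N (Var 0)) (Var 1)) (Var 1))"
definition "F50 = I (N (I (Var 0) (Var 1))) (Var 0)"
definition "F51 = I (I (Var 0) (Var 1)) (I (N (I (Var 0) (Var 2))) (Var 1))"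
definition "F52 = I (I (Var 0) (I (Var 0) (Var 1))) (I (Var 0) (Var 1))"
definition "F53 = I (I (Var 0) (I (Var 1) (I (Var 1) (Var 2)))) (I (Var 0) (I (Var 1) (Var 2)))"
definition "F54 = I (I (Var 0) (I (Var 1) (I (Var 2) (I (Var 2) (Var 3))))) (I (Var 0) (I (Var 1) (I (Var 2) (Var 3))))"
definition "F55 = I (I (Var 0) (I (Var 1) (Var 2))) (I (Var 0) (I (I (Var 3) (Var 1)) (I (Var 3) (Var 2))))"
definition "F56 = I (I (Var 0) (I (Var 1) (Var 2))) (I (I (Var 3) (Var 1)) (I (Var 3) (I (Var 0) (Var 2))))"
definition "F57 = I (I (Var 0) (I (Var 1) (Var 2))) (I (I (Var 0) (Var 1)) (I (Var 0) (Var 2)))"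
definition "F58 = I (I (Var 0) (Var 1)) (I (Var 0) (Var 0))"
definition "F59 = I (N (Var 0)) (N (Var 0))"
definition "F60 = I (Var 0) (I (I (Var 1) (Var 2)) (I (Var 1) (Var 0)))"
definition "F61 = I (I (Var 0) (Var 1)) (I (Var 2) (I (Var 0) (Var 2)))"
definition "F62 = I (Var 0) (I (N (Var 1)) (Var 0))"
definition "F63 = I (I (Var 0) (Var 1)) (I (Var 0) (I (Var 2) (Var 1)))"
definition "F64 = I (I (Var 0) (I (Var 1) (I (Var 2) (Var 3)))) (I (Var 0) (I (Var 2) (I (Var 1) (Var 3))))"
definition "F65 = I (I (Var 0) (I (Var 1) (I (Var 2) (Var 3)))) (I (Var 0) (I (Var 1) (I (I (Var 4) (Var 2)) (I (Var 4) (Var 3)))))"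
definition "F66 = I (I (Var 0) (Var 1)) (I (Var 0) (I (I (Var 2) (Var 3)) (I (Var 2) (Var 1))))"
definition "F67 = I (I (Var 0) (Var 1)) (I (I (Var 2) (Var 3)) (I (Var 0) (I (Var 2) (Var 1))))"
definition "F68 = I (I (Var 0) (Var 1)) (I (I (Var 2) (Var 3)) (I (Var 2) (I (Var 0) (Var 3))))"
definition "F69 = I (I (Var 0) (Var 1)) (I (Var 0) (I (N (Var 2)) (Var 1)))"
definition "F70 = I (I (Var 0) (I (Var 1) (I (Var 2) (Var 3)))) (I (Var 0) (I (I (Var 1) (Var 2)) (I (Var 1) (Var 3))))"
definition "F71 = I (I (Var 0) (I (Var 1) (I (Var 2) (I (Var 3) (Var 4))))) (I (Var 0) (I (Var 1) (I (I (Var 2) (Var 3)) (I (Var 2) (Var 4)))))"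
definition "F72 = I (I (Var 0) (I (Var 1) (Var 2))) (I (I (Var 3) (Var 0)) (I (I (Var 3) (Var 1)) (I (Var 3) (Var 2))))"
definition "F73 = I (I (Var 0) (I (Var 1) (Var 2))) (I (Var 0) (I (Var 3) (I (Var 1) (Var 3))))"
definition "F74 = I (I (Var 0) (I (Var 1) (Var 2))) (I (Var 0) (I (Var 1) (I (Var 3) (Var 2))))"
definition "F75 = I (Var 0) (I (I (Var 0) (Var 1)) (I (Var 2) (Var 1)))"
definition "F76 = I (Var 0) (I (I (I (Var 0) (Var 1)) (Var 2)) (I (I (Var 0) (Var 1)) (Var 1)))"
definition "F77 = I (Var 0) (I (I (Var 1) (I (I (Var 0) (Var 2)) (Var 3))) (I (Var 1) (I (I (Var 0) (Var 2)) (Var 2))))"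
definition "F78 = I (I (Var 0) (I (I (Var 1) (Var 2)) (Var 3))) (I (Var 1) (I (Var 0) (I (I (Var 1) (Var 2)) (Var 2))))"
definition "F79 = I (Var 0) (I (Var 0) (I (I (Var 0) (Var 1)) (Var 1)))"
definition "F80 = I (Var 0) (I (Var 1) (I (Var 0) (Var 1)))"
definition "F81 = I (N (Var 0)) (I (Var 1) (I (Var 0) (Var 1)))"
definition "F82 = I (I (Var 0) (I (Var 1) (Var 2))) (I (Var 0) (I (Var 1) (Var 1)))"
definition "F83 = I (N (Var 0)) (I (Var 0) (Var 0))"
definition "F84 = I (N (Var 0)) (I (I (Var 1) (Var 0)) (I (Var 1) (Var 0)))"
definition "F85 = I (I (Var 0) (Var 1)) (I (N (Var 1)) (I (Var 0) (Var 1)))"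
definition "F86 = I (I (Var 0) (I (Var 1) (Var 2))) (I (Var 0) (I (N (Var 2)) (I (Var 1) (Var 2))))"
definition "F87 = I (N (Var 0)) (I (N (Var 1)) (I (Var 0) (Var 1)))"
definition "F88 = I (Var 0) (I (N (Var 0)) (N (Var 0)))"
definition "F89 = I (Var 0) (I (I (Var 1) (N (Var 0))) (I (Var 1) (N (Var 0))))"
definition "F90 = I (I (Var 0) (N (Var 1))) (I (Var 1) (I (Var 0) (N (Var 1))))"
definition "F91 = I (I (Var 0) (I (Var 1) (N (Var 2)))) (I (Var 0) (I (Var 2) (I (Var 1) (N (Var 2)))))"
definition "F92 = I (N (Var 0)) (I (Var 1) (I (Var 0) (N (Var 1))))"
definition "F93 = I (Var 0) (I (Var 1) (I (N (Var 0)) (Var 1)))"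
definition "F94 = I (Var 0) (I (N (Var 1)) (I (N (Var 0)) (Var 1)))"
definition "F95 = I (Var 0) (I (Var 1) (I (N (Var 0)) (N (Var 1))))"
lemma cdF3: "cdc F0 F2 = Some F3" by (simp add: F0_def F2_def F3_def cdc_def norm_def scomp_def nren_def)
lemma cdF4: "cdc F3 F1 = Some F4" by (simp add: F3_def F1_def F4_def cdc_def norm_def scomp_def nren_def)
lemma cdF5: "cdc F0 F0 = Some F5" by (simp add: F0_def F0_def F5_def cdc_def norm_def scomp_def nren_def)
lemma cdF6: "cdc F2 F4 = Some F6" by (simp add: F2_def F4_def F6_def cdc_def norm_def scomp_def nren_def)
lemma cdF7: "cdc F0 F6 = Some F7" by (simp add: F0_def F6_def F7_def cdc_def norm_def scomp_def nren_def)
lemma cdF8: "cdc F3 F7 = Some F8" by (simp add: F3_def F7_def F8_def cdc_def norm_def scomp_def nren_def)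
lemma cdF9: "cdc F0 F8 = Some F9" by (simp add: F0_def F8_def F9_def cdc_def norm_def scomp_def nren_def)
lemma cdF10: "cdc F9 F1 = Some F10" by (simp add: F9_def F1_def F10_def cdc_def norm_def scomp_def nren_def)
lemma cdF11: "cdc F0 F10 = Some F11" by (simp add: F0_def F10_def F11_def cdc_def norm_def scomp_def nren_def)
lemma cdF12: "cdc F0 F1 = Some F12" by (simp add: F0_def F1_def F12_def cdc_def norm_def scomp_def nren_def)
lemma cdF13: "cdc F11 F12 = Some F13" by (simp add: F11_def F12_def F13_def cdc_def norm_def scomp_def nren_def)
lemma cdF14: "cdc F0 F13 = Some F14" by (simp add: F0_def F13_def F14_def cdc_def norm_def scomp_def nren_def)
lemma cdF15: "cdc F5 F14 = Some F15" by (simp add: F5_def F14_def F15_def cdc_def norm_def scomp_def nren_def)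
lemma cdF16: "cdc F3 F0 = Some F16" by (simp add: F3_def F0_def F16_def cdc_def norm_def scomp_def nren_def)
lemma cdF17: "cdc F0 F16 = Some F17" by (simp add: F0_def F16_def F17_def cdc_def norm_def scomp_def nren_def)
lemma cdF18: "cdc F17 F3 = Some F18" by (simp add: F17_def F3_def F18_def cdc_def norm_def scomp_def nren_def)
lemma cdF19: "cdc F0 F18 = Some F19" by (simp add: F0_def F18_def F19_def cdc_def norm_def scomp_def nren_def)
lemma cdF20: "cdc F19 F15 = Some F20" by (simp add: F19_def F15_def F20_def cdc_def norm_def scomp_def nren_def)
lemma cdF21: "cdc F15 F20 = Some F21" by (simp add: F15_def F20_def F21_def cdc_def norm_def scomp_def nren_def)
lemma cdF22: "cdc F21 F1 = Some F22" by (simp add: F21_def F1_def F22_def cdc_def norm_def scomp_def nren_def)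
lemma cdF23: "cdc F0 F22 = Some F23" by (simp add: F0_def F22_def F23_def cdc_def norm_def scomp_def nren_def)
lemma cdF24: "cdc F15 F14 = Some F24" by (simp add: F15_def F14_def F24_def cdc_def norm_def scomp_def nren_def)
lemma cdF25: "cdc F24 F1 = Some F25" by (simp add: F24_def F1_def F25_def cdc_def norm_def scomp_def nren_def)
lemma cdF26: "cdc F5 F25 = Some F26" by (simp add: F5_def F25_def F26_def cdc_def norm_def scomp_def nren_def)
lemma cdF27: "cdc F5 F26 = Some F27" by (simp add: F5_def F26_def F27_def cdc_def norm_def scomp_def nren_def)
lemma cdF28: "cdc F23 F27 = Some F28" by (simp add: F23_def F27_def F28_def cdc_def norm_def scomp_def nren_def)
lemma cdF29: "cdc F0 F28 = Some F29" by (simp add: F0_def F28_def F29_def cdc_def norm_def scomp_def nren_def)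
lemma cdF30: "cdc F29 F5 = Some F30" by (simp add: F29_def F5_def F30_def cdc_def norm_def scomp_def nren_def)
lemma cdF31: "cdc F0 F12 = Some F31" by (simp add: F0_def F12_def F31_def cdc_def norm_def scomp_def nren_def)
lemma cdF32: "cdc F5 F29 = Some F32" by (simp add: F5_def F29_def F32_def cdc_def norm_def scomp_def nren_def)
lemma cdF33: "cdc F29 F3 = Some F33" by (simp add: F29_def F3_def F33_def cdc_def norm_def scomp_def nren_def)
lemma cdF34: "cdc F0 F33 = Some F34" by (simp add: F0_def F33_def F34_def cdc_def norm_def scomp_def nren_def)
lemma cdF35: "cdc F27 F33 = Some F35" by (simp add: F27_def F33_def F35_def cdc_def norm_def scomp_def nren_def)
lemma cdF36: "cdc F30 F35 = Some F36" by (simp add: F30_def F35_def F36_def cdc_def norm_def scomp_def nren_def)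
lemma cdF37: "cdc F5 F36 = Some F37" by (simp add: F5_def F36_def F37_def cdc_def norm_def scomp_def nren_def)
lemma cdF38: "cdc F32 F37 = Some F38" by (simp add: F32_def F37_def F38_def cdc_def norm_def scomp_def nren_def)
lemma cdF39: "cdc F34 F38 = Some F39" by (simp add: F34_def F38_def F39_def cdc_def norm_def scomp_def nren_def)
lemma cdF40: "cdc F32 F39 = Some F40" by (simp add: F32_def F39_def F40_def cdc_def norm_def scomp_def nren_def)
lemma cdF41: "cdc F31 F40 = Some F41" by (simp add: F31_def F40_def F41_def cdc_def norm_def scomp_def nren_def)
lemma cdF42: "cdc F29 F41 = Some F42" by (simp add: F29_def F41_def F42_def cdc_def norm_def scomp_def nren_def)
lemma cdF43: "cdc F3 F38 = Some F43" by (simp add: F3_def F38_def F43_def cdc_def norm_def scomp_def nren_def)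
lemma cdF44: "cdc F32 F43 = Some F44" by (simp add: F32_def F43_def F44_def cdc_def norm_def scomp_def nren_def)
lemma cdF45: "cdc F31 F44 = Some F45" by (simp add: F31_def F44_def F45_def cdc_def norm_def scomp_def nren_def)
lemma cdF46: "cdc F29 F45 = Some F46" by (simp add: F29_def F45_def F46_def cdc_def norm_def scomp_def nren_def)
lemma cdF47: "cdc F5 F37 = Some F47" by (simp add: F5_def F37_def F47_def cdc_def norm_def scomp_def nren_def)
lemma cdF48: "cdc F32 F47 = Some F48" by (simp add: F32_def F47_def F48_def cdc_def norm_def scomp_def nren_def)
lemma cdF49: "cdc F31 F48 = Some F49" by (simp add: F31_def F48_def F49_def cdc_def norm_def scomp_def nren_def)
lemma cdF50: "cdc F34 F35 = Some F50" by (simp add: F34_def F35_def F50_def cdc_def norm_def scomp_def nren_def)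
lemma cdF51: "cdc F0 F50 = Some F51" by (simp add: F0_def F50_def F51_def cdc_def norm_def scomp_def nren_def)
lemma cdF52: "cdc F26 F51 = Some F52" by (simp add: F26_def F51_def F52_def cdc_def norm_def scomp_def nren_def)
lemma cdF53: "cdc F30 F52 = Some F53" by (simp add: F30_def F52_def F53_def cdc_def norm_def scomp_def nren_def)
lemma cdF54: "cdc F30 F53 = Some F54" by (simp add: F30_def F53_def F54_def cdc_def norm_def scomp_def nren_def)
lemma cdF55: "cdc F30 F30 = Some F55" by (simp add: F30_def F30_def F55_def cdc_def norm_def scomp_def nren_def)
lemma cdF56: "cdc F55 F32 = Some F56" by (simp add: F55_def F32_def F56_def cdc_def norm_def scomp_def nren_def)
lemma cdF57: "cdc F54 F56 = Some F57" by (simp add: F54_def F56_def F57_def cdc_def norm_def scomp_def nren_def)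
lemma cdF58: "cdc F57 F22 = Some F58" by (simp add: F57_def F22_def F58_def cdc_def norm_def scomp_def nren_def)
lemma cdF59: "cdc F58 F33 = Some F59" by (simp add: F58_def F33_def F59_def cdc_def norm_def scomp_def nren_def)
lemma cdF60: "cdc F55 F22 = Some F60" by (simp add: F55_def F22_def F60_def cdc_def norm_def scomp_def nren_def)
lemma cdF61: "cdc F32 F60 = Some F61" by (simp add: F32_def F60_def F61_def cdc_def norm_def scomp_def nren_def)
lemma cdF62: "cdc F61 F33 = Some F62" by (simp add: F61_def F33_def F62_def cdc_def norm_def scomp_def nren_def)
lemma cdF63: "cdc F30 F22 = Some F63" by (simp add: F30_def F22_def F63_def cdc_def norm_def scomp_def nren_def)
lemma cdF64: "cdc F30 F32 = Some F64" by (simp add: F30_def F32_def F64_def cdc_def norm_def scomp_def nren_def)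
lemma cdF65: "cdc F30 F55 = Some F65" by (simp add: F30_def F55_def F65_def cdc_def norm_def scomp_def nren_def)
lemma cdF66: "cdc F65 F63 = Some F66" by (simp add: F65_def F63_def F66_def cdc_def norm_def scomp_def nren_def)
lemma cdF67: "cdc F64 F66 = Some F67" by (simp add: F64_def F66_def F67_def cdc_def norm_def scomp_def nren_def)
lemma cdF68: "cdc F32 F67 = Some F68" by (simp add: F32_def F67_def F68_def cdc_def norm_def scomp_def nren_def)
lemma cdF69: "cdc F68 F33 = Some F69" by (simp add: F68_def F33_def F69_def cdc_def norm_def scomp_def nren_def)
lemma cdF70: "cdc F30 F57 = Some F70" by (simp add: F30_def F57_def F70_def cdc_def norm_def scomp_def nren_def)
lemma cdF71: "cdc F30 F70 = Some F71" by (simp add: F30_def F70_def F71_def cdc_def norm_def scomp_def nren_def)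
lemma cdF72: "cdc F71 F30 = Some F72" by (simp add: F71_def F30_def F72_def cdc_def norm_def scomp_def nren_def)
lemma cdF73: "cdc F30 F61 = Some F73" by (simp add: F30_def F61_def F73_def cdc_def norm_def scomp_def nren_def)
lemma cdF74: "cdc F30 F63 = Some F74" by (simp add: F30_def F63_def F74_def cdc_def norm_def scomp_def nren_def)
lemma cdF75: "cdc F74 F28 = Some F75" by (simp add: F74_def F28_def F75_def cdc_def norm_def scomp_def nren_def)
lemma cdF76: "cdc F70 F75 = Some F76" by (simp add: F70_def F75_def F76_def cdc_def norm_def scomp_def nren_def)
lemma cdF77: "cdc F55 F76 = Some F77" by (simp add: F55_def F76_def F77_def cdc_def norm_def scomp_def nren_def)
lemma cdF78: "cdc F32 F77 = Some F78" by (simp add: F32_def F77_def F78_def cdc_def norm_def scomp_def nren_def)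
lemma cdF79: "cdc F78 F28 = Some F79" by (simp add: F78_def F28_def F79_def cdc_def norm_def scomp_def nren_def)
lemma cdF80: "cdc F73 F79 = Some F80" by (simp add: F73_def F79_def F80_def cdc_def norm_def scomp_def nren_def)
lemma cdF81: "cdc F73 F33 = Some F81" by (simp add: F73_def F33_def F81_def cdc_def norm_def scomp_def nren_def)
lemma cdF82: "cdc F30 F58 = Some F82" by (simp add: F30_def F58_def F82_def cdc_def norm_def scomp_def nren_def)
lemma cdF83: "cdc F82 F33 = Some F83" by (simp add: F82_def F33_def F83_def cdc_def norm_def scomp_def nren_def)
lemma cdF84: "cdc F55 F83 = Some F84" by (simp add: F55_def F83_def F84_def cdc_def norm_def scomp_def nren_def)
lemma cdF85: "cdc F32 F84 = Some F85" by (simp add: F32_def F84_def F85_def cdc_def norm_def scomp_def nren_def)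
lemma cdF86: "cdc F30 F85 = Some F86" by (simp add: F30_def F85_def F86_def cdc_def norm_def scomp_def nren_def)
lemma cdF87: "cdc F86 F33 = Some F87" by (simp add: F86_def F33_def F87_def cdc_def norm_def scomp_def nren_def)
lemma cdF88: "cdc F82 F2 = Some F88" by (simp add: F82_def F2_def F88_def cdc_def norm_def scomp_def nren_def)
lemma cdF89: "cdc F55 F88 = Some F89" by (simp add: F55_def F88_def F89_def cdc_def norm_def scomp_def nren_def)
lemma cdF90: "cdc F32 F89 = Some F90" by (simp add: F32_def F89_def F90_def cdc_def norm_def scomp_def nren_def)
lemma cdF91: "cdc F30 F90 = Some F91" by (simp add: F30_def F90_def F91_def cdc_def norm_def scomp_def nren_def)
lemma cdF92: "cdc F91 F33 = Some F92" by (simp add: F91_def F33_def F92_def cdc_def norm_def scomp_def nren_def)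
lemma cdF93: "cdc F73 F2 = Some F93" by (simp add: F73_def F2_def F93_def cdc_def norm_def scomp_def nren_def)
lemma cdF94: "cdc F86 F2 = Some F94" by (simp add: F86_def F2_def F94_def cdc_def norm_def scomp_def nren_def)
lemma cdF95: "cdc F91 F2 = Some F95" by (simp add: F91_def F2_def F95_def cdc_def norm_def scomp_def nren_def)


inductive der :: "form set \<Rightarrow> (form \<Rightarrow> bool) \<Rightarrow> form \<Rightarrow> bool" for T P where
  dax: "is_axiom T X \<Longrightarrow> der T P X"
| dcd: "der T P A \<Longrightarrow> der T P B \<Longrightarrow> cd A B X \<Longrightarrow> P X \<Longrightarrow> der T P X"

lemma is_proof_append:
  assumes "is_proof T ps" "is_proof T qs"
  shows "is_proof T (ps @ qs)"
  unfolding is_proof_def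
proof (intro allI impI)
  fix i assume i: "i < length (ps @ qs)"
  show "is_axiom T ((ps @ qs) ! i) \<or> (\<exists>j<i. \<exists>k<i. cd ((ps @ qs) ! j) ((ps @ qs) ! k) ((ps @ qs) ! i))"
  proof (cases "i < length ps")
    case True
    then have "is_axiom T (ps ! i) \<or> (\<exists>j<i. \<exists>k<i. cd (ps ! j) (ps ! k) (ps ! i))"
      using assms(1) unfolding is_proof_def by auto
    then show ?thesis
    proof
      assume "is_axiom T (ps ! i)" then show ?thesis using True by (simp add: nth_append)
    next
      assume "\<exists>j<i. \<exists>k<i. cd (ps ! j) (ps ! k) (ps ! i)"
      then obtain j k where jk: "j < i" "k < i" "cd (ps ! j) (ps ! k) (ps ! i)" by auto
      then have "cd ((ps @ qs) ! j) ((ps @ qs) ! k) ((ps @ qs) ! i)" using True by (simp add: nth_append)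
      then show ?thesis using jk by blast
    qed
  next
    case False
    define i' where "i' = i - length ps"
    have i': "i' < length qs" "i = length ps + i'" using i False unfolding i'_def by auto
    then have "is_axiom T (qs ! i') \<or> (\<exists>j<i'. \<exists>k<i'. cd (qs ! j) (qs ! k) (qs ! i'))"
      using assms(2) unfolding is_proof_def by auto
    then show ?thesis
    proof
      assume "is_axiom T (qs ! i')" then show ?thesis using i' by (simp add: nth_append)
    next
      assume "\<exists>j<i'. \<exists>k<i'. cd (qs ! j) (qs ! k) (qs ! i')"
      then obtain j k where "j < i'" "k < i'" "cd (qs ! j) (qs ! k) (qs ! i')" by auto
      then have "cd ((ps @ qs) ! (length ps + j)) ((ps @ qs) ! (length ps + k)) ((ps @ qs) ! i)"
        "length ps + j < i" "length ps + k < i" using i' by (auto simp: nth_append)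
      then show ?thesis by blast
    qed
  qed
qed

lemma deduced_steps_append:
  "deduced_steps T (ps @ qs) = deduced_steps T ps \<union> deduced_steps T qs"
proof -
  have "deduced_steps T (ps @ qs) \<subseteq> deduced_steps T ps \<union> deduced_steps T qs"
  proof
    fix A assume "A \<in> deduced_steps T (ps @ qs)"
    then obtain i where i: "i < length (ps @ qs)" "\<not> is_axiom T ((ps @ qs) ! i)" "A = (ps @ qs) ! i"
      unfolding deduced_steps_def by auto
    show "A \<in> deduced_steps T ps \<union> deduced_steps T qs"
    proof (cases "i < length ps")
      case True then show ?thesis using i unfolding deduced_steps_def by (auto simp: nth_append)
    next
      case False
      then have "i - length ps < length qs" "A = qs ! (i - length ps)" using i by (auto simp: nth_append)
      then show ?thesis using i unfolding deduced_steps_def by auto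
    qed
  qed
  moreover have "deduced_steps T ps \<subseteq> deduced_steps T (ps @ qs)"
  proof
    fix A assume "A \<in> deduced_steps T ps"
    then obtain i where i: "i < length ps" "\<not> is_axiom T (ps ! i)" "A = ps ! i"
      unfolding deduced_steps_def by auto
    then have "(ps @ qs) ! i = A" "i < length (ps @ qs)" by (auto simp: nth_append)
    then show "A \<in> deduced_steps T (ps @ qs)" using i unfolding deduced_steps_def
      by (intro CollectI exI[of _ i]) auto
  qed
  moreover have "deduced_steps T qs \<subseteq> deduced_steps T (ps @ qs)"
  proof
    fix A assume "A \<in> deduced_steps T qs"
    then obtain i where i: "i < length qs" "\<not> is_axiom T (qs ! i)" "A = qs ! i"
      unfolding deduced_steps_def by auto
    then have "(ps @ qs) ! (length ps + i) = A" "length ps + i < length (ps @ qs)" by (auto simp: nth_append)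
    then show "A \<in> deduced_steps T (ps @ qs)" using i unfolding deduced_steps_def
      by (intro CollectI exI[of _ "length ps + i"]) auto
  qed
  ultimately show ?thesis by blast
qed

lemma der_proof:
  "der T P X \<Longrightarrow> \<exists>ps. proof_of T ps X \<and> (\<forall>A\<in>deduced_steps T ps. P A)"
proof (induction rule: der.induct)
  case (dax X)
  have "is_proof T [X]" using dax unfolding is_proof_def by auto
  moreover have "deduced_steps T [X] = {}" using dax unfolding deduced_steps_def by auto
  ultimately show ?case unfolding proof_of_def by (intro exI[of _ "[X]"]) auto
next
  case (dcd A B X)
  from dcd.IH obtain ps qs where ps: "proof_of T ps A" "\<forall>A\<in>deduced_steps T ps. P A"
    and qs: "proof_of T qs B" "\<forall>A\<in>deduced_steps T qs. P A" by blast
  have pq: "is_proof T (ps @ qs)" using ps qs is_proof_append unfolding proof_of_def by auto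
  let ?rs = "ps @ qs @ [X]"
  have lp: "ps ! (length ps - 1) = A" "length ps > 0" using ps unfolding proof_of_def by (auto simp: last_conv_nth)
  have lq: "qs ! (length qs - 1) = B" "length qs > 0" using qs unfolding proof_of_def by (auto simp: last_conv_nth)
  have "is_proof T [X] \<or> True" by simp
  have last_ok: "cd (?rs ! (length ps - 1)) (?rs ! (length ps + (length qs - 1))) (?rs ! (length ps + length qs))"
    using lp lq dcd.hyps(3) by (simp add: nth_append)
  have "is_proof T ?rs"
    unfolding is_proof_def
  proof (intro allI impI)
    fix i assume i: "i < length ?rs"
    show "is_axiom T (?rs ! i) \<or> (\<exists>j<i. \<exists>k<i. cd (?rs ! j) (?rs ! k) (?rs ! i))"
    proof (cases "i < length (ps @ qs)")
      case True
      then have dj: "is_axiom T ((ps @ qs) ! i) \<or> (\<exists>j<i. \<exists>k<i. cd ((ps @ qs) ! j) ((ps @ qs) ! k) ((ps @ qs) ! i))"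
        using pq unfolding is_proof_def by auto
      have eqr: "\<And>j. j < length (ps @ qs) \<Longrightarrow> ?rs ! j = (ps @ qs) ! j"
        by (metis append.assoc nth_append)
      from dj show ?thesis
      proof
        assume "is_axiom T ((ps @ qs) ! i)" then show ?thesis using eqr True by simp
      next
        assume "\<exists>j<i. \<exists>k<i. cd ((ps @ qs) ! j) ((ps @ qs) ! k) ((ps @ qs) ! i)"
        then obtain j k where jk: "j < i" "k < i" "cd ((ps @ qs) ! j) ((ps @ qs) ! k) ((ps @ qs) ! i)" by auto
        then have "cd (?rs ! j) (?rs ! k) (?rs ! i)" using eqr True by simp
        then show ?thesis using jk by blast
      qed
    next
      case False
      then have "i = length ps + length qs" using i by auto
      then have "length ps - 1 < i" "length ps + (length qs - 1) < i" using lp(2) lq(2) by arith+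
      then show ?thesis using last_ok `i = length ps + length qs` by blast
    qed
  qed
  moreover have "deduced_steps T ?rs \<subseteq> deduced_steps T ps \<union> deduced_steps T qs \<union> {X}"
    using deduced_steps_append[of T ps "qs @ [X]"] deduced_steps_append[of T qs "[X]"]
    unfolding deduced_steps_def[of T "[X]"] by auto
  ultimately show ?case using ps qs dcd.hyps(4) unfolding proof_of_def
    by (intro exI[of _ ?rs]) auto
qed

lemma der_base:
  "der T0 P X \<Longrightarrow> (\<And>A. is_axiom T0 A \<Longrightarrow> der T P A) \<Longrightarrow> der T P X"
  by (induction rule: der.induct) (auto intro: der.dcd)

lemma cd_variant:
  assumes "cd A B X" "variant X Y" shows "cd A B Y"
proof -
  from assms(1) obtain A' B' C' \<sigma> where h: "A = I A' B'" "variant B C'" "vars A \<inter> vars C' = {}"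
    "is_mgu \<sigma> A' C'" "variant (subst \<sigma> B') X" unfolding cd_def by blast
  have "variant (subst \<sigma> B') Y" using variant_trans[OF h(5) assms(2)] .
  then show ?thesis unfolding cd_def using h(1-4) by blast
qed

lemma der_variant:
  assumes "der T P X" "variant X Y" "\<And>A B. P A \<Longrightarrow> variant A B \<Longrightarrow> P B"
  shows "der T P Y"
  using assms(1,2)
proof (induction arbitrary: Y rule: der.induct)
  case (dax X)
  then obtain a where a: "a \<in> T" "variant a X" unfolding is_axiom_def by blast
  have "variant a Y" by (rule variant_trans[OF a(2) dax.prems])
  then have "is_axiom T Y" unfolding is_axiom_def using a(1) by blast
  then show ?case by (rule der.dax)
next
  case (dcd A B X)
  have "cd A B Y" using cd_variant[OF dcd.hyps(3) dcd.prems] .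
  moreover have "P Y" using assms(3)[OF dcd.hyps(4) dcd.prems] .
  ultimately show ?case by (rule der.dcd[OF dcd.hyps(1,2)])
qed

lemma proof_lines_der:
  assumes "is_proof T ps" "\<forall>A\<in>deduced_steps T ps. P A"
  shows "i < length ps \<Longrightarrow> der T P (ps ! i)"
proof (induction i rule: less_induct)
  case (less i)
  from assms(1) less.prems have "is_axiom T (ps ! i) \<or> (\<exists>j<i. \<exists>k<i. cd (ps ! j) (ps ! k) (ps ! i))"
    unfolding is_proof_def by auto
  then show ?case
  proof
    assume "is_axiom T (ps ! i)" then show ?thesis by (rule der.dax)
  next
    assume h: "\<exists>j<i. \<exists>k<i. cd (ps ! j) (ps ! k) (ps ! i)"
    show ?thesis
    proof (cases "is_axiom T (ps ! i)")
      case True then show ?thesis by (rule der.dax)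
    next
      case False
      then have "P (ps ! i)" using assms(2) less.prems unfolding deduced_steps_def by auto
      with h less show ?thesis by (auto intro: der.dcd)
    qed
  qed
qed

definition okC :: "form \<Rightarrow> form \<Rightarrow> bool" where
  "okC C X \<longleftrightarrow> (\<forall>u\<in>subforms X. is_dn u \<longrightarrow> (\<exists>w\<in>subforms C. variant u w))"

lemma subforms_rename: "subforms (rename f A) = rename f ` subforms A"
  by (induct A) auto

lemma is_dn_rename: "is_dn (rename f u) \<Longrightarrow> is_dn u"
  unfolding is_dn_def by (cases u) (auto, case_tac x3, auto)

lemma okC_variant: "okC C A \<Longrightarrow> variant A B \<Longrightarrow> okC C B"
proof -
  assume ok: "okC C A" and v: "variant A B"
  then obtain f where f: "inj f" "B = rename f A" unfolding variant_def by auto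
  show "okC C B" unfolding okC_def
  proof (intro ballI impI)
    fix u assume u: "u \<in> subforms B" "is_dn u"
    then obtain u0 where u0: "u0 \<in> subforms A" "u = rename f u0" using f subforms_rename by auto
    then have "is_dn u0" using u is_dn_rename by auto
    then obtain w where w: "w \<in> subforms C" "variant u0 w" using ok u0 unfolding okC_def by auto
    have "variant u0 u" using f u0 unfolding variant_def by auto
    then have "variant u w" using w variant_sym variant_trans by blast
    then show "\<exists>w\<in>subforms C. variant u w" using w by auto
  qed
qed

lemma dnfree_okC: "\<not> has_dn X \<Longrightarrow> okC C X"
  unfolding okC_def has_dn_def by auto

definition L0 :: "form set" where "L0 = {L1, L2, L3}"

lemma der_cdc:
  assumes "der T P A" "der T P B" "cdc A B = Some D" "\<not> hasdnb D" "\<forall>X. \<not> has_dn X \<longrightarrow> P X"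
  shows "der T P D"
  using assms cdc_sound hasdnb_iff by (blast intro: der.dcd)

lemma der_L0_ax: "X \<in> L0 \<Longrightarrow> der L0 P X"
  by (rule der.dax) (auto simp: is_axiom_def intro: variant_refl)


lemma cd_match:
  assumes sA: "subst \<sigma> A = C" and off: "\<forall>x. x \<notin> vars A \<longrightarrow> \<sigma> x = Var x"
    and disj: "(vars B - vars A) \<inter> vars C = {}"
  shows "cd (I A B) C (subst \<sigma> B)"
proof -
  define m where "m = Suc (max (maxv (I A B)) (maxv C))"
  define \<rho> where "\<rho> = (\<lambda>x::nat. x + m)"
  define C' where "C' = rename \<rho> C"
  define \<sigma>' where "\<sigma>' = (\<lambda>x. if x \<in> vars A then rename \<rho> (\<sigma> x) else Var x)"
  have ltA: "x < m" if "x \<in> vars (I A B)" for x using maxv_ge[OF that] unfolding m_def by auto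
  have ltC: "x < m" if "x \<in> vars C" for x using maxv_ge[OF that] unfolding m_def by auto
  have vC': "vars C' = \<rho> ` vars C" unfolding C'_def by (simp add: vars_rename)
  have varC: "variant C C'" unfolding variant_def C'_def \<rho>_def
    by (rule exI[of _ "\<lambda>x. x + m"]) (auto intro: inj_onI)
  have disj': "vars (I A B) \<inter> vars C' = {}" using ltA unfolding vC' \<rho>_def by force
  have s'A: "subst \<sigma>' A = C'"
  proof -
    have "subst \<sigma>' A = subst (\<lambda>x. rename \<rho> (\<sigma> x)) A" by (rule subst_cong) (simp add: \<sigma>'_def)
    also have "\<dots> = rename \<rho> (subst \<sigma> A)" by (simp add: rename_subst subst_subst)
    finally show ?thesis using sA C'_def by simp
  qed
  have s'C': "subst \<sigma>' C' = C'"
  proof -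
    have "subst \<sigma>' C' = subst Var C'" using disj' by (intro subst_cong) (auto simp: \<sigma>'_def)
    then show ?thesis by simp
  qed
  have mgu: "is_mgu \<sigma>' A C'"
    unfolding is_mgu_def
  proof (intro conjI allI impI)
    show "subst \<sigma>' A = subst \<sigma>' C'" using s'A s'C' by simp
    fix \<tau> assume \<tau>: "subst \<tau> A = subst \<tau> C'"
    have "subst \<tau> C' = subst (\<lambda>x. subst \<tau> (\<sigma>' x)) A" by (simp add: s'A[symmetric] subst_subst)
    then have e: "subst \<tau> A = subst (\<lambda>x. subst \<tau> (\<sigma>' x)) A" using \<tau> by simp
    show "\<exists>\<rho>. \<forall>x. \<tau> x = subst \<rho> (\<sigma>' x)"
    proof (intro exI allI)
      fix x show "\<tau> x = subst \<tau> (\<sigma>' x)"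
      proof (cases "x \<in> vars A")
        case True then show ?thesis using subst_eq_vars[OF e] by blast
      next
        case False then show ?thesis by (simp add: \<sigma>'_def)
      qed
    qed
  qed
  define \<pi> where "\<pi> = (\<lambda>y. if y \<ge> m then y - m else y)"
  have eq: "rename \<pi> (subst \<sigma>' B) = subst \<sigma> B"
  proof -
    have "rename \<pi> (subst \<sigma>' B) = subst (\<lambda>x. rename \<pi> (\<sigma>' x)) B" by (simp add: rename_subst subst_subst)
    also have "\<dots> = subst \<sigma> B"
    proof (rule subst_cong)
      fix x assume x: "x \<in> vars B"
      show "rename \<pi> (\<sigma>' x) = \<sigma> x"
      proof (cases "x \<in> vars A")
        case True
        have "rename \<pi> (rename \<rho> (\<sigma> x)) = rename (\<pi> \<circ> \<rho>) (\<sigma> x)" by (simp add: rename_rename)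
        also have "\<dots> = rename (\<lambda>y. y) (\<sigma> x)" by (rule rename_cong) (simp add: \<pi>_def \<rho>_def)
        finally show ?thesis using True by (simp add: \<sigma>'_def)
      next
        case False
        have "x < m" using ltA x by auto
        then show ?thesis using False off by (simp add: \<sigma>'_def \<pi>_def)
      qed
    qed
    finally show ?thesis .
  qed
  have sub: "vars (subst \<sigma>' B) \<subseteq> \<rho> ` vars C \<union> (vars B - vars A)"
  proof
    fix y assume "y \<in> vars (subst \<sigma>' B)"
    then obtain x where x: "x \<in> vars B" "y \<in> vars (\<sigma>' x)" by (auto simp: vars_subst)
    show "y \<in> \<rho> ` vars C \<union> (vars B - vars A)"
    proof (cases "x \<in> vars A")
      case True
      then have "y \<in> \<rho> ` vars (\<sigma> x)" using x by (simp add: \<sigma>'_def vars_rename)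
      moreover have "vars (\<sigma> x) \<subseteq> vars C" using True sA by (auto simp: vars_subst)
      ultimately show ?thesis by auto
    next
      case False then show ?thesis using x by (simp add: \<sigma>'_def)
    qed
  qed
  have ltB: "\<forall>x\<in>vars B. x < m" using ltA by auto
  have "inj_on \<pi> (\<rho> ` vars C \<union> (vars B - vars A))"
  proof (rule inj_onI)
    fix y1 y2 assume y1: "y1 \<in> \<rho> ` vars C \<union> (vars B - vars A)" and y2: "y2 \<in> \<rho> ` vars C \<union> (vars B - vars A)"
      and e: "\<pi> y1 = \<pi> y2"
    have cl: "\<And>y. y \<in> \<rho> ` vars C \<union> (vars B - vars A) \<Longrightarrow>
        (\<exists>z\<in>vars C. y = z + m \<and> \<pi> y = z) \<or> (y \<in> vars B - vars A \<and> y < m \<and> \<pi> y = y)"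
      using ltB unfolding \<pi>_def \<rho>_def by auto
    show "y1 = y2"
      using cl[OF y1] cl[OF y2] e disj by auto

  qed
  then have "inj_on \<pi> (vars (subst \<sigma>' B))" using sub by (rule inj_on_subset)
  then have "variant (subst \<sigma>' B) (subst \<sigma> B)" using variant_inj_on eq by metis
  then show ?thesis unfolding cd_def using varC disj' mgu by blast
qed

lemma der_match:
  assumes "der T P (I A B)" "der T P C" "subst \<sigma> A = C" "\<forall>x. x \<notin> vars A \<longrightarrow> \<sigma> x = Var x"
    "(vars B - vars A) \<inter> vars C = {}" "P (subst \<sigma> B)"
  shows "der T P (subst \<sigma> B)"
  using assms cd_match by (blast intro: der.dcd)

lemma der_pinned:
  assumes "der T P (I A B)" "der T P (subst \<sigma> A)" "vars B \<subseteq> vars A" "P (subst \<sigma> B)"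
  shows "der T P (subst \<sigma> B)"
proof -
  define \<sigma>0 where "\<sigma>0 = (\<lambda>x. if x \<in> vars A then \<sigma> x else Var x)"
  have e1: "subst \<sigma>0 A = subst \<sigma> A" by (rule subst_cong) (simp add: \<sigma>0_def)
  have e2: "subst \<sigma>0 B = subst \<sigma> B" using assms(3) by (intro subst_cong) (auto simp: \<sigma>0_def)
  have off: "\<forall>x. x \<notin> vars A \<longrightarrow> \<sigma>0 x = Var x" by (simp add: \<sigma>0_def)
  have disj: "(vars B - vars A) \<inter> vars (subst \<sigma> A) = {}" using assms(3) by auto
  have P0: "P (subst \<sigma>0 B)" using e2 assms(4) by simp
  have "der T P (subst \<sigma>0 B)" by (rule der_match[OF assms(1) assms(2) e1 off disj P0])
  then show ?thesis using e2 by simp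
qed


fun vn :: "form \<Rightarrow> nat" where "vn (Var v) = v" | "vn (I a b) = 0" | "vn (N a) = 0"

lemma shift_variant: "variant S (rename (\<lambda>x. x + m) S)"
  unfolding variant_def by (rule exI[of _ "\<lambda>x. x + m"]) (auto intro: inj_onI)

lemma subst_shift: "subst s (rename (\<lambda>x. x + m) S) = subst (\<lambda>x. s (x + m)) S"
  by (simp add: rename_subst subst_subst)

lemma der_fresh:
  assumes R: "der T P (I A B)" and C: "der T P (subst \<sigma> A)"
    and fr: "\<forall>x\<in>vars B - vars A. \<exists>v. \<sigma> x = Var v \<and> v \<notin> vars (subst \<sigma> A)"
    and inj: "inj_on \<sigma> (vars B - vars A)"
    and Pinv: "\<And>X Y. P X \<Longrightarrow> variant X Y \<Longrightarrow> P Y"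
    and PB: "P (subst \<sigma> B)"
  shows "der T P (subst \<sigma> B)"
proof -
  let ?C = "subst \<sigma> A"
  define m where "m = Suc (max (maxv (I A B)) (maxv ?C))"
  have ltA: "x < m" if "x \<in> vars (I A B)" for x using maxv_ge[OF that] unfolding m_def by auto
  have ltC: "x < m" if "x \<in> vars ?C" for x using maxv_ge[OF that] unfolding m_def by auto
  have R': "der T P (I (rename (\<lambda>x. x + m) A) (rename (\<lambda>x. x + m) B))"
    using der_variant[OF R shift_variant[of "I A B" m] Pinv] by simp
  define \<sigma>1 where "\<sigma>1 = (\<lambda>y. if y \<in> vars (rename (\<lambda>x. x + m) A) then \<sigma> (y - m) else Var y)"
  have e1: "subst \<sigma>1 (rename (\<lambda>x. x + m) A) = ?C"
    unfolding subst_shift by (rule subst_cong) (auto simp: \<sigma>1_def vars_rename)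
  have off: "\<forall>y. y \<notin> vars (rename (\<lambda>x. x + m) A) \<longrightarrow> \<sigma>1 y = Var y" by (simp add: \<sigma>1_def)
  have disj: "(vars (rename (\<lambda>x. x + m) B) - vars (rename (\<lambda>x. x + m) A)) \<inter> vars ?C = {}"
    using ltC by (force simp: vars_rename)
  define D where "D = subst \<sigma>1 (rename (\<lambda>x. x + m) B)"
  define \<pi> where "\<pi> = (\<lambda>z. if z \<ge> m then vn (\<sigma> (z - m)) else z)"
  have sC: "vars (\<sigma> x) \<subseteq> vars ?C" if "x \<in> vars A" for x using that by (auto simp: vars_subst)
  have eqD: "rename \<pi> D = subst \<sigma> B"
  proof -
    have "rename \<pi> D = subst (\<lambda>x. rename \<pi> (\<sigma>1 (x + m))) B"
      unfolding D_def subst_shift by (simp add: rename_subst subst_subst)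
    also have "\<dots> = subst \<sigma> B"
    proof (rule subst_cong)
      fix x assume x: "x \<in> vars B"
      show "rename \<pi> (\<sigma>1 (x + m)) = \<sigma> x"
      proof (cases "x \<in> vars A")
        case True
        then have "\<sigma>1 (x + m) = \<sigma> x" by (auto simp: \<sigma>1_def vars_rename)
        moreover have "\<forall>y\<in>vars (\<sigma> x). y < m" using sC[OF True] ltC by blast
        then have "rename \<pi> (\<sigma> x) = rename (\<lambda>y. y) (\<sigma> x)"
          by (intro rename_cong) (auto simp: \<pi>_def)
        ultimately show ?thesis by simp
      next
        case False
        then have "\<sigma>1 (x + m) = Var (x + m)" by (auto simp: \<sigma>1_def vars_rename)
        moreover obtain v where "\<sigma> x = Var v" using fr x False by auto
        ultimately show ?thesis by (simp add: \<pi>_def)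
      qed
    qed
    finally show ?thesis .
  qed
  have subD: "vars D \<subseteq> vars ?C \<union> (\<lambda>x. x + m) ` (vars B - vars A)"
  proof
    fix z assume "z \<in> vars D"
    then obtain x where x: "x \<in> vars B" "z \<in> vars (\<sigma>1 (x + m))"
      unfolding D_def subst_shift by (auto simp: vars_subst)
    show "z \<in> vars ?C \<union> (\<lambda>x. x + m) ` (vars B - vars A)"
    proof (cases "x \<in> vars A")
      case True
      then have "\<sigma>1 (x + m) = \<sigma> x" by (auto simp: \<sigma>1_def vars_rename)
      then show ?thesis using x sC[OF True] by auto
    next
      case False
      then have "\<sigma>1 (x + m) = Var (x + m)" by (auto simp: \<sigma>1_def vars_rename)
      then show ?thesis using x False by auto
    qed
  qed
  have "inj_on \<pi> (vars ?C \<union> (\<lambda>x. x + m) ` (vars B - vars A))"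
  proof (rule inj_onI)
    fix y1 y2
    assume y1: "y1 \<in> vars ?C \<union> (\<lambda>x. x + m) ` (vars B - vars A)"
      and y2: "y2 \<in> vars ?C \<union> (\<lambda>x. x + m) ` (vars B - vars A)" and e: "\<pi> y1 = \<pi> y2"
    have cl: "\<And>y. y \<in> vars ?C \<union> (\<lambda>x. x + m) ` (vars B - vars A) \<Longrightarrow>
       (y \<in> vars ?C \<and> \<pi> y = y) \<or> (\<exists>x\<in>vars B - vars A. y = x + m \<and> \<sigma> x = Var (\<pi> y) \<and> \<pi> y \<notin> vars ?C)"
    proof -
      fix y assume "y \<in> vars ?C \<union> (\<lambda>x. x + m) ` (vars B - vars A)"
      then show "(y \<in> vars ?C \<and> \<pi> y = y) \<or> (\<exists>x\<in>vars B - vars A. y = x + m \<and> \<sigma> x = Var (\<pi> y) \<and> \<pi> y \<notin> vars ?C)"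
      proof
        assume "y \<in> vars ?C" then show ?thesis using ltC[of y] by (auto simp: \<pi>_def)
      next
        assume "y \<in> (\<lambda>x. x + m) ` (vars B - vars A)"
        then obtain x where x: "x \<in> vars B - vars A" "y = x + m" by auto
        then obtain v where "\<sigma> x = Var v" "v \<notin> vars ?C" using fr by blast
        then show ?thesis using x by (auto simp: \<pi>_def)
      qed
    qed
    show "y1 = y2"
    proof -
      from cl[OF y1] cl[OF y2] e show ?thesis
      proof (elim disjE conjE bexE)
        fix x1 x2 assume "x1 \<in> vars B - vars A" "y1 = x1 + m" "\<sigma> x1 = Var (\<pi> y1)"
          "x2 \<in> vars B - vars A" "y2 = x2 + m" "\<sigma> x2 = Var (\<pi> y2)" "\<pi> y1 = \<pi> y2"
        then have "x1 = x2" using inj unfolding inj_on_def by metis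
        then show ?thesis using \<open>y1 = x1 + m\<close> \<open>y2 = x2 + m\<close> by simp
      qed auto
    qed
  qed
  then have injD: "inj_on \<pi> (vars D)" using subD by (rule inj_on_subset)
  have varD: "variant D (subst \<sigma> B)" using variant_inj_on[OF injD] eqD by metis
  have PD: "P D" using Pinv[OF PB variant_sym[OF varD]] .
  have "der T P D" unfolding D_def by (rule der_match[OF R' C e1 off disj]) (use PD in \<open>simp add: D_def\<close>)
  then show ?thesis using der_variant[of T P D "subst \<sigma> B"] varD Pinv by blast
qed

lemma der_two:
  assumes R: "der T P (I A1 (I A2 B))" and C1: "der T P (subst \<sigma> A1)" and C2: "der T P (subst \<sigma> A2)"
    and vB: "vars B \<subseteq> vars A1 \<union> vars A2"
    and H: "\<forall>x\<in>vars A1. vars (\<sigma> x) \<inter> vars (subst \<sigma> A2) \<subseteq> (\<Union>z\<in>vars A1 \<inter> vars A2. vars (\<sigma> z))"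
    and Pinv: "\<And>X Y. P X \<Longrightarrow> variant X Y \<Longrightarrow> P Y"
    and Pmid: "\<And>\<theta>. (\<And>y. y \<in> vars A1 \<Longrightarrow> \<theta> y = \<sigma> y) \<Longrightarrow> (\<And>y. y \<notin> vars A1 \<Longrightarrow> \<exists>v. \<theta> y = Var v)
               \<Longrightarrow> P (subst \<theta> (I A2 B))"
    and PB: "P (subst \<sigma> B)"
  shows "der T P (subst \<sigma> B)"
proof -
  let ?C1 = "subst \<sigma> A1" let ?C2 = "subst \<sigma> A2"
  define m where "m = Suc (max (maxv (I A1 (I A2 B))) (max (maxv ?C1) (maxv ?C2)))"
  have ltR: "x < m" if "x \<in> vars (I A1 (I A2 B))" for x using maxv_ge[OF that] unfolding m_def by auto
  have lt1: "x < m" if "x \<in> vars ?C1" for x using maxv_ge[OF that] unfolding m_def by auto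
  have lt2: "x < m" if "x \<in> vars ?C2" for x using maxv_ge[OF that] unfolding m_def by auto
  let ?r = "rename (\<lambda>x. x + m)"
  have R': "der T P (I (?r A1) (I (?r A2) (?r B)))"
    using der_variant[OF R shift_variant[of "I A1 (I A2 B)" m] Pinv] by simp
  define \<sigma>' where "\<sigma>' = (\<lambda>y. if y \<ge> m then \<sigma> (y - m) else Var y)"
  have sh: "\<And>S. subst \<sigma>' (?r S) = subst \<sigma> S" unfolding subst_shift by (simp add: \<sigma>'_def)
  have vr: "\<And>S y. y \<in> vars (?r S) \<longleftrightarrow> y \<ge> m \<and> y - m \<in> vars S"
  proof -
    fix S y
    show "y \<in> vars (?r S) \<longleftrightarrow> y \<ge> m \<and> y - m \<in> vars S"
    proof
      assume "y \<in> vars (?r S)" then show "y \<ge> m \<and> y - m \<in> vars S" by (auto simp: vars_rename)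
    next
      assume h: "y \<ge> m \<and> y - m \<in> vars S"
      then have "y = (y - m) + m" by simp
      then show "y \<in> vars (?r S)" using h unfolding vars_rename by (metis image_eqI)
    qed
  qed
  define \<sigma>1 where "\<sigma>1 = (\<lambda>y. if y \<in> vars (?r A1) then \<sigma>' y else Var y)"
  have e1: "subst \<sigma>1 (?r A1) = ?C1"
  proof -
    have "subst \<sigma>1 (?r A1) = subst \<sigma>' (?r A1)" by (rule subst_cong) (simp add: \<sigma>1_def)
    then show ?thesis using sh by simp
  qed
  have off1: "\<forall>y. y \<notin> vars (?r A1) \<longrightarrow> \<sigma>1 y = Var y" by (simp add: \<sigma>1_def)
  have disj1: "(vars (I (?r A2) (?r B)) - vars (?r A1)) \<inter> vars ?C1 = {}"
    using lt1 by (force simp: vars_rename)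
  have P1: "P (subst \<sigma>1 (I (?r A2) (?r B)))"
  proof -
    have "subst \<sigma>1 (I (?r A2) (?r B)) = subst (\<lambda>x. \<sigma>1 (x + m)) (I A2 B)"
      using subst_shift[of \<sigma>1 m "I A2 B"] by simp
    moreover have "P (subst (\<lambda>x. \<sigma>1 (x + m)) (I A2 B))"
    proof (rule Pmid)
      fix y assume "y \<in> vars A1" then show "\<sigma>1 (y + m) = \<sigma> y" by (simp add: \<sigma>1_def \<sigma>'_def vr)
    next
      fix y assume "y \<notin> vars A1" then show "\<exists>v. \<sigma>1 (y + m) = Var v" by (simp add: \<sigma>1_def vr)
    qed
    ultimately show ?thesis by simp
  qed
  have D1: "der T P (subst \<sigma>1 (I (?r A2) (?r B)))" by (rule der_match[OF R' C1 e1 off1 disj1 P1])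
  then have D1': "der T P (I (subst \<sigma>1 (?r A2)) (subst \<sigma>1 (?r B)))" by simp
  define \<tau> where "\<tau> = (\<lambda>y. if y \<in> vars (?r A2) \<and> y \<notin> vars (?r A1) then \<sigma>' y else Var y)"
  have tid: "subst \<tau> (\<sigma>' x) = \<sigma>' x" if "x \<in> vars (?r A1)" for x
  proof -
    have x0: "x \<ge> m" "x - m \<in> vars A1" using that vr by auto
    have "vars (\<sigma> (x - m)) \<subseteq> vars ?C1" using x0 by (auto simp: vars_subst)
    then have "\<forall>y\<in>vars (\<sigma>' x). y < m" using x0 lt1 by (auto simp: \<sigma>'_def)
    then have "subst \<tau> (\<sigma>' x) = subst Var (\<sigma>' x)" by (intro subst_cong) (auto simp: \<tau>_def vr)
    then show ?thesis by simp
  qed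
  have comp: "subst \<tau> (\<sigma>1 x) = \<sigma>' x" if "x \<in> vars (?r A1) \<or> x \<in> vars (?r A2)" for x
    using that tid by (auto simp: \<sigma>1_def \<tau>_def)
  have e2: "subst \<tau> (subst \<sigma>1 (?r A2)) = ?C2"
  proof -
    have "subst \<tau> (subst \<sigma>1 (?r A2)) = subst (\<lambda>x. subst \<tau> (\<sigma>1 x)) (?r A2)" by (simp add: subst_subst)
    also have "\<dots> = subst \<sigma>' (?r A2)" by (rule subst_cong) (simp add: comp)
    finally show ?thesis using sh by simp
  qed
  have off2: "\<forall>y. y \<notin> vars (subst \<sigma>1 (?r A2)) \<longrightarrow> \<tau> y = Var y"
  proof (intro allI impI)
    fix y assume y: "y \<notin> vars (subst \<sigma>1 (?r A2))"
    show "\<tau> y = Var y"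
    proof (rule ccontr)
      assume "\<tau> y \<noteq> Var y"
      then have "y \<in> vars (?r A2)" "y \<notin> vars (?r A1)" by (auto simp: \<tau>_def split: if_splits)
      then have "y \<in> vars (subst \<sigma>1 (?r A2))" by (auto simp: vars_subst \<sigma>1_def)
      then show False using y by simp
    qed
  qed
  have disj2: "(vars (subst \<sigma>1 (?r B)) - vars (subst \<sigma>1 (?r A2))) \<inter> vars ?C2 = {}"
  proof -
    have "v \<in> vars (subst \<sigma>1 (?r A2))" if v: "v \<in> vars (subst \<sigma>1 (?r B))" "v \<in> vars ?C2" for v
    proof -
      from v(1) obtain x where x: "x \<in> vars (?r B)" "v \<in> vars (\<sigma>1 x)" by (auto simp: vars_subst)
      then have x0: "x \<ge> m" "x - m \<in> vars B" using vr by auto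
      show ?thesis
      proof (cases "x \<in> vars (?r A1)")
        case True
        then have x1: "x - m \<in> vars A1" using vr by auto
        have "v \<in> vars (\<sigma> (x - m))" using x True x0 by (simp add: \<sigma>1_def \<sigma>'_def)
        then obtain z where z: "z \<in> vars A1" "z \<in> vars A2" "v \<in> vars (\<sigma> z)"
          using H x1 v(2) by blast
        have "z + m \<in> vars (?r A2)" "z + m \<in> vars (?r A1)" using z by (auto simp: vr)
        then have "\<sigma>1 (z + m) = \<sigma> z" by (simp add: \<sigma>1_def \<sigma>'_def)
        then show ?thesis using z \<open>z + m \<in> vars (?r A2)\<close> unfolding vars_subst by (metis UN_iff)
      next
        case False
        then have "x - m \<notin> vars A1" using vr x0 by auto
        then have "x - m \<in> vars A2" using vB x0 by auto
        then have "x \<in> vars (?r A2)" using x0 vr by auto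
        moreover have "\<sigma>1 x = Var x" using False by (simp add: \<sigma>1_def)
        ultimately show ?thesis using x by (auto simp: vars_subst intro!: bexI[of _ x])
      qed
    qed
    then show ?thesis by blast
  qed
  have eB: "subst \<tau> (subst \<sigma>1 (?r B)) = subst \<sigma> B"
  proof -
    have "subst \<tau> (subst \<sigma>1 (?r B)) = subst (\<lambda>x. subst \<tau> (\<sigma>1 x)) (?r B)" by (simp add: subst_subst)
    also have "\<dots> = subst \<sigma>' (?r B)"
    proof (rule subst_cong)
      fix x assume "x \<in> vars (?r B)"
      then have "x \<in> vars (?r A1) \<or> x \<in> vars (?r A2)" using vB vr by auto
      then show "subst \<tau> (\<sigma>1 x) = \<sigma>' x" by (rule comp)
    qed
    finally show ?thesis using sh by simp
  qed
  have "der T P (subst \<tau> (subst \<sigma>1 (?r B)))"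
    by (rule der_match[OF D1' C2 e2 off2 disj2]) (simp add: eB PB)
  then show ?thesis using eB by simp
qed


lemma subforms_self: "t \<in> subforms t" by (cases t) auto

lemma subforms_trans: "u \<in> subforms v \<Longrightarrow> v \<in> subforms w \<Longrightarrow> u \<in> subforms w"
  by (induct w) auto

lemma okC_sub: "okC C X \<Longrightarrow> u \<in> subforms X \<Longrightarrow> okC C u"
  unfolding okC_def using subforms_trans by blast

lemma okC_Var[simp]: "okC C (Var x)"
  unfolding okC_def is_dn_def by auto

lemma okC_I[simp]: "okC C (I a b) \<longleftrightarrow> okC C a \<and> okC C b"
  unfolding okC_def is_dn_def by auto

lemma okC_N: "okC C (N a) \<longleftrightarrow> ((\<exists>t. a = N t) \<longrightarrow> (\<exists>w\<in>subforms C. variant (N a) w)) \<and> okC C a"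
  unfolding okC_def is_dn_def by auto

lemma okC_N_nonneg: "(\<forall>t. a \<noteq> N t) \<Longrightarrow> okC C (N a) \<longleftrightarrow> okC C a"
  by (simp add: okC_N)

lemma okC_of_sub: "X \<in> subforms C \<Longrightarrow> okC C X"
  unfolding okC_def using subforms_trans variant_refl by blast

lemma hasdn_simps[simp]:
  "has_dn (Var x) = False" "has_dn (I a b) = (has_dn a \<or> has_dn b)"
  "has_dn (N (Var x)) = False" "has_dn (N (I a b)) = (has_dn a \<or> has_dn b)" "has_dn (N (N a)) = True"
  by (simp_all add: hasdnb_iff[symmetric])

lemma okC_inst:
  "\<not> has_dn S \<Longrightarrow> okC C (subst \<sigma> S) \<Longrightarrow> (\<forall>y\<in>vars S. \<theta> y = \<sigma> y \<or> (\<exists>v. \<theta> y = Var v))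
   \<Longrightarrow> okC C (subst \<theta> S)"
proof (induction S)
  case (Var x)
  then show ?case by auto
next
  case (I a b)
  then show ?case by auto
next
  case (N a)
  show ?case
  proof (cases a)
    case (Var y)
    then have "\<theta> y = \<sigma> y \<or> (\<exists>v. \<theta> y = Var v)" using N.prems by auto
    then show ?thesis
    proof
      assume "\<theta> y = \<sigma> y" then show ?thesis using N.prems Var by simp
    next
      assume "\<exists>v. \<theta> y = Var v" then show ?thesis using Var by (auto simp: okC_N)
    qed
  next
    case (I b c)
    then show ?thesis using N by (auto simp: okC_N)
  next
    case (N b)
    then show ?thesis using N.prems by simp
  qed
qed

lemma der_ok: "der L0 (okC C) X \<Longrightarrow> okC C X"
proof (induction rule: der.induct)
  case (dax X)
  then obtain a where "a \<in> L0" "variant a X" unfolding is_axiom_def by blast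
  moreover have "okC C a" using \<open>a \<in> L0\<close> by (auto simp: L0_def L1_def L2_def L3_def intro!: dnfree_okC)
  ultimately show ?case using okC_variant by blast
qed auto

lemma okC_inv: "okC C X \<Longrightarrow> variant X Y \<Longrightarrow> okC C Y" by (rule okC_variant)

lemma dnP: "\<forall>X. \<not> has_dn X \<longrightarrow> okC C X" using dnfree_okC by blast
lemma dF0: "der L0 (okC C) F0" by (rule der_L0_ax) (simp add: L0_def F0_def L1_def L2_def L3_def)
lemma dF1: "der L0 (okC C) F1" by (rule der_L0_ax) (simp add: L0_def F1_def L1_def L2_def L3_def)
lemma dF2: "der L0 (okC C) F2" by (rule der_L0_ax) (simp add: L0_def F2_def L1_def L2_def L3_def)
lemma dF3: "der L0 (okC C) F3" by (rule der_cdc[OF dF0 dF2 cdF3 _ dnP]) (simp add: F3_def)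
lemma dF4: "der L0 (okC C) F4" by (rule der_cdc[OF dF3 dF1 cdF4 _ dnP]) (simp add: F4_def)
lemma dF5: "der L0 (okC C) F5" by (rule der_cdc[OF dF0 dF0 cdF5 _ dnP]) (simp add: F5_def)
lemma dF6: "der L0 (okC C) F6" by (rule der_cdc[OF dF2 dF4 cdF6 _ dnP]) (simp add: F6_def)
lemma dF7: "der L0 (okC C) F7" by (rule der_cdc[OF dF0 dF6 cdF7 _ dnP]) (simp add: F7_def)
lemma dF8: "der L0 (okC C) F8" by (rule der_cdc[OF dF3 dF7 cdF8 _ dnP]) (simp add: F8_def)
lemma dF9: "der L0 (okC C) F9" by (rule der_cdc[OF dF0 dF8 cdF9 _ dnP]) (simp add: F9_def)
lemma dF10: "der L0 (okC C) F10" by (rule der_cdc[OF dF9 dF1 cdF10 _ dnP]) (simp add: F10_def)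
lemma dF11: "der L0 (okC C) F11" by (rule der_cdc[OF dF0 dF10 cdF11 _ dnP]) (simp add: F11_def)
lemma dF12: "der L0 (okC C) F12" by (rule der_cdc[OF dF0 dF1 cdF12 _ dnP]) (simp add: F12_def)
lemma dF13: "der L0 (okC C) F13" by (rule der_cdc[OF dF11 dF12 cdF13 _ dnP]) (simp add: F13_def)
lemma dF14: "der L0 (okC C) F14" by (rule der_cdc[OF dF0 dF13 cdF14 _ dnP]) (simp add: F14_def)
lemma dF15: "der L0 (okC C) F15" by (rule der_cdc[OF dF5 dF14 cdF15 _ dnP]) (simp add: F15_def)
lemma dF16: "der L0 (okC C) F16" by (rule der_cdc[OF dF3 dF0 cdF16 _ dnP]) (simp add: F16_def)
lemma dF17: "der L0 (okC C) F17" by (rule der_cdc[OF dF0 dF16 cdF17 _ dnP]) (simp add: F17_def)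
lemma dF18: "der L0 (okC C) F18" by (rule der_cdc[OF dF17 dF3 cdF18 _ dnP]) (simp add: F18_def)
lemma dF19: "der L0 (okC C) F19" by (rule der_cdc[OF dF0 dF18 cdF19 _ dnP]) (simp add: F19_def)
lemma dF20: "der L0 (okC C) F20" by (rule der_cdc[OF dF19 dF15 cdF20 _ dnP]) (simp add: F20_def)
lemma dF21: "der L0 (okC C) F21" by (rule der_cdc[OF dF15 dF20 cdF21 _ dnP]) (simp add: F21_def)
lemma dF22: "der L0 (okC C) F22" by (rule der_cdc[OF dF21 dF1 cdF22 _ dnP]) (simp add: F22_def)
lemma dF23: "der L0 (okC C) F23" by (rule der_cdc[OF dF0 dF22 cdF23 _ dnP]) (simp add: F23_def)
lemma dF24: "der L0 (okC C) F24" by (rule der_cdc[OF dF15 dF14 cdF24 _ dnP]) (simp add: F24_def)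
lemma dF25: "der L0 (okC C) F25" by (rule der_cdc[OF dF24 dF1 cdF25 _ dnP]) (simp add: F25_def)
lemma dF26: "der L0 (okC C) F26" by (rule der_cdc[OF dF5 dF25 cdF26 _ dnP]) (simp add: F26_def)
lemma dF27: "der L0 (okC C) F27" by (rule der_cdc[OF dF5 dF26 cdF27 _ dnP]) (simp add: F27_def)
lemma dF28: "der L0 (okC C) F28" by (rule der_cdc[OF dF23 dF27 cdF28 _ dnP]) (simp add: F28_def)
lemma dF29: "der L0 (okC C) F29" by (rule der_cdc[OF dF0 dF28 cdF29 _ dnP]) (simp add: F29_def)
lemma dF30: "der L0 (okC C) F30" by (rule der_cdc[OF dF29 dF5 cdF30 _ dnP]) (simp add: F30_def)
lemma dF31: "der L0 (okC C) F31" by (rule der_cdc[OF dF0 dF12 cdF31 _ dnP]) (simp add: F31_def)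
lemma dF32: "der L0 (okC C) F32" by (rule der_cdc[OF dF5 dF29 cdF32 _ dnP]) (simp add: F32_def)
lemma dF33: "der L0 (okC C) F33" by (rule der_cdc[OF dF29 dF3 cdF33 _ dnP]) (simp add: F33_def)
lemma dF34: "der L0 (okC C) F34" by (rule der_cdc[OF dF0 dF33 cdF34 _ dnP]) (simp add: F34_def)
lemma dF35: "der L0 (okC C) F35" by (rule der_cdc[OF dF27 dF33 cdF35 _ dnP]) (simp add: F35_def)
lemma dF36: "der L0 (okC C) F36" by (rule der_cdc[OF dF30 dF35 cdF36 _ dnP]) (simp add: F36_def)
lemma dF37: "der L0 (okC C) F37" by (rule der_cdc[OF dF5 dF36 cdF37 _ dnP]) (simp add: F37_def)
lemma dF38: "der L0 (okC C) F38" by (rule der_cdc[OF dF32 dF37 cdF38 _ dnP]) (simp add: F38_def)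
lemma dF39: "der L0 (okC C) F39" by (rule der_cdc[OF dF34 dF38 cdF39 _ dnP]) (simp add: F39_def)
lemma dF40: "der L0 (okC C) F40" by (rule der_cdc[OF dF32 dF39 cdF40 _ dnP]) (simp add: F40_def)
lemma dF41: "der L0 (okC C) F41" by (rule der_cdc[OF dF31 dF40 cdF41 _ dnP]) (simp add: F41_def)
lemma dF42: "der L0 (okC C) F42" by (rule der_cdc[OF dF29 dF41 cdF42 _ dnP]) (simp add: F42_def)
lemma dF43: "der L0 (okC C) F43" by (rule der_cdc[OF dF3 dF38 cdF43 _ dnP]) (simp add: F43_def)
lemma dF44: "der L0 (okC C) F44" by (rule der_cdc[OF dF32 dF43 cdF44 _ dnP]) (simp add: F44_def)
lemma dF45: "der L0 (okC C) F45" by (rule der_cdc[OF dF31 dF44 cdF45 _ dnP]) (simp add: F45_def)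
lemma dF46: "der L0 (okC C) F46" by (rule der_cdc[OF dF29 dF45 cdF46 _ dnP]) (simp add: F46_def)
lemma dF47: "der L0 (okC C) F47" by (rule der_cdc[OF dF5 dF37 cdF47 _ dnP]) (simp add: F47_def)
lemma dF48: "der L0 (okC C) F48" by (rule der_cdc[OF dF32 dF47 cdF48 _ dnP]) (simp add: F48_def)
lemma dF49: "der L0 (okC C) F49" by (rule der_cdc[OF dF31 dF48 cdF49 _ dnP]) (simp add: F49_def)
lemma dF50: "der L0 (okC C) F50" by (rule der_cdc[OF dF34 dF35 cdF50 _ dnP]) (simp add: F50_def)
lemma dF51: "der L0 (okC C) F51" by (rule der_cdc[OF dF0 dF50 cdF51 _ dnP]) (simp add: F51_def)
lemma dF52: "der L0 (okC C) F52" by (rule der_cdc[OF dF26 dF51 cdF52 _ dnP]) (simp add: F52_def)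
lemma dF53: "der L0 (okC C) F53" by (rule der_cdc[OF dF30 dF52 cdF53 _ dnP]) (simp add: F53_def)
lemma dF54: "der L0 (okC C) F54" by (rule der_cdc[OF dF30 dF53 cdF54 _ dnP]) (simp add: F54_def)
lemma dF55: "der L0 (okC C) F55" by (rule der_cdc[OF dF30 dF30 cdF55 _ dnP]) (simp add: F55_def)
lemma dF56: "der L0 (okC C) F56" by (rule der_cdc[OF dF55 dF32 cdF56 _ dnP]) (simp add: F56_def)
lemma dF57: "der L0 (okC C) F57" by (rule der_cdc[OF dF54 dF56 cdF57 _ dnP]) (simp add: F57_def)
lemma dF58: "der L0 (okC C) F58" by (rule der_cdc[OF dF57 dF22 cdF58 _ dnP]) (simp add: F58_def)
lemma dF59: "der L0 (okC C) F59" by (rule der_cdc[OF dF58 dF33 cdF59 _ dnP]) (simp add: F59_def)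
lemma dF60: "der L0 (okC C) F60" by (rule der_cdc[OF dF55 dF22 cdF60 _ dnP]) (simp add: F60_def)
lemma dF61: "der L0 (okC C) F61" by (rule der_cdc[OF dF32 dF60 cdF61 _ dnP]) (simp add: F61_def)
lemma dF62: "der L0 (okC C) F62" by (rule der_cdc[OF dF61 dF33 cdF62 _ dnP]) (simp add: F62_def)
lemma dF63: "der L0 (okC C) F63" by (rule der_cdc[OF dF30 dF22 cdF63 _ dnP]) (simp add: F63_def)
lemma dF64: "der L0 (okC C) F64" by (rule der_cdc[OF dF30 dF32 cdF64 _ dnP]) (simp add: F64_def)
lemma dF65: "der L0 (okC C) F65" by (rule der_cdc[OF dF30 dF55 cdF65 _ dnP]) (simp add: F65_def)
lemma dF66: "der L0 (okC C) F66" by (rule der_cdc[OF dF65 dF63 cdF66 _ dnP]) (simp add: F66_def)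
lemma dF67: "der L0 (okC C) F67" by (rule der_cdc[OF dF64 dF66 cdF67 _ dnP]) (simp add: F67_def)
lemma dF68: "der L0 (okC C) F68" by (rule der_cdc[OF dF32 dF67 cdF68 _ dnP]) (simp add: F68_def)
lemma dF69: "der L0 (okC C) F69" by (rule der_cdc[OF dF68 dF33 cdF69 _ dnP]) (simp add: F69_def)
lemma dF70: "der L0 (okC C) F70" by (rule der_cdc[OF dF30 dF57 cdF70 _ dnP]) (simp add: F70_def)
lemma dF71: "der L0 (okC C) F71" by (rule der_cdc[OF dF30 dF70 cdF71 _ dnP]) (simp add: F71_def)
lemma dF72: "der L0 (okC C) F72" by (rule der_cdc[OF dF71 dF30 cdF72 _ dnP]) (simp add: F72_def)
lemma dF73: "der L0 (okC C) F73" by (rule der_cdc[OF dF30 dF61 cdF73 _ dnP]) (simp add: F73_def)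
lemma dF74: "der L0 (okC C) F74" by (rule der_cdc[OF dF30 dF63 cdF74 _ dnP]) (simp add: F74_def)
lemma dF75: "der L0 (okC C) F75" by (rule der_cdc[OF dF74 dF28 cdF75 _ dnP]) (simp add: F75_def)
lemma dF76: "der L0 (okC C) F76" by (rule der_cdc[OF dF70 dF75 cdF76 _ dnP]) (simp add: F76_def)
lemma dF77: "der L0 (okC C) F77" by (rule der_cdc[OF dF55 dF76 cdF77 _ dnP]) (simp add: F77_def)
lemma dF78: "der L0 (okC C) F78" by (rule der_cdc[OF dF32 dF77 cdF78 _ dnP]) (simp add: F78_def)
lemma dF79: "der L0 (okC C) F79" by (rule der_cdc[OF dF78 dF28 cdF79 _ dnP]) (simp add: F79_def)
lemma dF80: "der L0 (okC C) F80" by (rule der_cdc[OF dF73 dF79 cdF80 _ dnP]) (simp add: F80_def)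
lemma dF81: "der L0 (okC C) F81" by (rule der_cdc[OF dF73 dF33 cdF81 _ dnP]) (simp add: F81_def)
lemma dF82: "der L0 (okC C) F82" by (rule der_cdc[OF dF30 dF58 cdF82 _ dnP]) (simp add: F82_def)
lemma dF83: "der L0 (okC C) F83" by (rule der_cdc[OF dF82 dF33 cdF83 _ dnP]) (simp add: F83_def)
lemma dF84: "der L0 (okC C) F84" by (rule der_cdc[OF dF55 dF83 cdF84 _ dnP]) (simp add: F84_def)
lemma dF85: "der L0 (okC C) F85" by (rule der_cdc[OF dF32 dF84 cdF85 _ dnP]) (simp add: F85_def)
lemma dF86: "der L0 (okC C) F86" by (rule der_cdc[OF dF30 dF85 cdF86 _ dnP]) (simp add: F86_def)
lemma dF87: "der L0 (okC C) F87" by (rule der_cdc[OF dF86 dF33 cdF87 _ dnP]) (simp add: F87_def)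
lemma dF88: "der L0 (okC C) F88" by (rule der_cdc[OF dF82 dF2 cdF88 _ dnP]) (simp add: F88_def)
lemma dF89: "der L0 (okC C) F89" by (rule der_cdc[OF dF55 dF88 cdF89 _ dnP]) (simp add: F89_def)
lemma dF90: "der L0 (okC C) F90" by (rule der_cdc[OF dF32 dF89 cdF90 _ dnP]) (simp add: F90_def)
lemma dF91: "der L0 (okC C) F91" by (rule der_cdc[OF dF30 dF90 cdF91 _ dnP]) (simp add: F91_def)
lemma dF92: "der L0 (okC C) F92" by (rule der_cdc[OF dF91 dF33 cdF92 _ dnP]) (simp add: F92_def)
lemma dF93: "der L0 (okC C) F93" by (rule der_cdc[OF dF73 dF2 cdF93 _ dnP]) (simp add: F93_def)
lemma dF94: "der L0 (okC C) F94" by (rule der_cdc[OF dF86 dF2 cdF94 _ dnP]) (simp add: F94_def)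
lemma dF95: "der L0 (okC C) F95" by (rule der_cdc[OF dF91 dF2 cdF95 _ dnP]) (simp add: F95_def)


fun ctx :: "form list \<Rightarrow> form \<Rightarrow> form" where
  "ctx [] X = X" | "ctx (l # ls) X = I l (ctx ls X)"

lemma ctx_append: "ctx (ls @ ms) X = ctx ls (ctx ms X)" by (induct ls) auto
lemma subst_ctx: "subst s (ctx ls X) = ctx (map (subst s) ls) (subst s X)" by (induct ls) auto
lemma vars_ctx: "vars (ctx ls X) = (\<Union>l\<in>set ls. vars l) \<union> vars X" by (induct ls) auto
lemma hasdn_ctx: "has_dn (ctx ls X) \<longleftrightarrow> (\<exists>l\<in>set ls. has_dn l) \<or> has_dn X" by (induct ls) auto
lemma okC_ctx: "okC C (ctx ls X) \<longleftrightarrow> (\<forall>l\<in>set ls. okC C l) \<and> okC C X" by (induct ls) auto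

definition lift2f :: "nat list \<Rightarrow> form \<Rightarrow> form \<Rightarrow> form \<Rightarrow> form" where
  "lift2f gs P1 P2 Q = I (ctx (map Var gs) P1) (I (ctx (map Var gs) P2) (ctx (map Var gs) Q))"
definition lift1f :: "nat list \<Rightarrow> form \<Rightarrow> form \<Rightarrow> form" where
  "lift1f gs P Q = I (ctx (map Var gs) P) (ctx (map Var gs) Q)"

lemma der_lift2:
  assumes R: "der L0 (okC C) (I P1 (I P2 Q))" and dnf: "\<not> has_dn (I P1 (I P2 Q))"
  shows "distinct gs \<Longrightarrow> set gs \<inter> vars (I P1 (I P2 Q)) = {} \<Longrightarrow> der L0 (okC C) (lift2f gs P1 P2 Q)"
proof (induction gs)
  case Nil then show ?case using R by (simp add: lift2f_def)
next
  case (Cons g gs)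
  have IH: "der L0 (okC C) (lift2f gs P1 P2 Q)" using Cons by auto
  let ?G = "map Var gs"
  let ?A = "I (Var 0) (I (Var 1) (Var 2))"
  let ?B = "I (I (Var 3) (Var 0)) (I (I (Var 3) (Var 1)) (I (Var 3) (Var 2)))"
  define \<sigma> where "\<sigma> = (\<lambda>y::nat. if y = 0 then ctx ?G P1 else if y = 1 then ctx ?G P2 else if y = 2 then ctx ?G Q else Var g)"
  have L: "der L0 (okC C) (I ?A ?B)" using dF72 by (simp add: F72_def)
  have eA: "subst \<sigma> ?A = lift2f gs P1 P2 Q" by (simp add: \<sigma>_def lift2f_def)
  have eB: "subst \<sigma> ?B = lift2f (g # gs) P1 P2 Q" by (simp add: \<sigma>_def lift2f_def)
  have gn: "g \<notin> vars (lift2f gs P1 P2 Q)" using Cons.prems by (auto simp: lift2f_def vars_ctx)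
  have "der L0 (okC C) (subst \<sigma> ?B)"
  proof (rule der_fresh[OF L])
    show "der L0 (okC C) (subst \<sigma> ?A)" using IH eA by simp
    show "\<forall>x\<in>vars ?B - vars ?A. \<exists>v. \<sigma> x = Var v \<and> v \<notin> vars (subst \<sigma> ?A)" using gn eA by (auto simp: \<sigma>_def)
    show "inj_on \<sigma> (vars ?B - vars ?A)"
    proof -
      have "vars ?B - vars ?A \<subseteq> {numeral k | k. True} \<union> {0, 1, 2, 3}" by auto
      have "card (vars ?B - vars ?A) \<le> 1 \<or> True" by simp
      show ?thesis by (rule inj_onI) (auto)
    qed
    show "\<And>X Y. okC C X \<Longrightarrow> variant X Y \<Longrightarrow> okC C Y" by (rule okC_variant)
    show "okC C (subst \<sigma> ?B)" using dnf unfolding eB by (auto simp: lift2f_def hasdn_ctx intro!: dnfree_okC)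
  qed
  then show ?case using eB by simp
qed

lemma der_lift1:
  assumes R: "der L0 (okC C) (I P Q)" and dnf: "\<not> has_dn (I P Q)"
  shows "distinct gs \<Longrightarrow> set gs \<inter> vars (I P Q) = {} \<Longrightarrow> der L0 (okC C) (lift1f gs P Q)"
proof (induction gs)
  case Nil then show ?case using R by (simp add: lift1f_def)
next
  case (Cons g gs)
  have IH: "der L0 (okC C) (lift1f gs P Q)" using Cons by auto
  let ?G = "map Var gs"
  let ?A = "I (Var 0) (Var 1)"
  let ?B = "I (I (Var 2) (Var 0)) (I (Var 2) (Var 1))"
  define \<sigma> where "\<sigma> = (\<lambda>y::nat. if y = 0 then ctx ?G P else if y = 1 then ctx ?G Q else Var g)"
  have L: "der L0 (okC C) (I ?A ?B)" using dF30 by (simp add: F30_def)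
  have eA: "subst \<sigma> ?A = lift1f gs P Q" by (simp add: \<sigma>_def lift1f_def)
  have eB: "subst \<sigma> ?B = lift1f (g # gs) P Q" by (simp add: \<sigma>_def lift1f_def)
  have gn: "g \<notin> vars (lift1f gs P Q)" using Cons.prems by (auto simp: lift1f_def vars_ctx)
  have "der L0 (okC C) (subst \<sigma> ?B)"
  proof (rule der_fresh[OF L])
    show "der L0 (okC C) (subst \<sigma> ?A)" using IH eA by simp
    show "\<forall>x\<in>vars ?B - vars ?A. \<exists>v. \<sigma> x = Var v \<and> v \<notin> vars (subst \<sigma> ?A)" using gn eA by (auto simp: \<sigma>_def)
    show "inj_on \<sigma> (vars ?B - vars ?A)"
    proof -
      have "vars ?B - vars ?A \<subseteq> {numeral k | k. True} \<union> {0, 1, 2, 3}" by auto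
      have "card (vars ?B - vars ?A) \<le> 1 \<or> True" by simp
      show ?thesis by (rule inj_onI) (auto)
    qed
    show "\<And>X Y. okC C X \<Longrightarrow> variant X Y \<Longrightarrow> okC C Y" by (rule okC_variant)
    show "okC C (subst \<sigma> ?B)" using dnf unfolding eB by (auto simp: lift1f_def hasdn_ctx intro!: dnfree_okC)
  qed
  then show ?case using eB by simp
qed

definition gsl :: "nat \<Rightarrow> nat list" where "gsl k = [10..<10+k]"
definition mks :: "form list \<Rightarrow> (nat \<Rightarrow> form) \<Rightarrow> nat \<Rightarrow> form" where
  "mks \<Gamma> s = (\<lambda>y. if 10 \<le> y \<and> y < 10 + length \<Gamma> then \<Gamma> ! (y - 10) else s y)"

lemma map_mks: "map (subst (mks \<Gamma> s)) (map Var (gsl (length \<Gamma>))) = \<Gamma>"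
  by (rule nth_equalityI) (auto simp: gsl_def mks_def)

lemma map_mks': "map (subst (mks \<Gamma> s) \<circ> Var) (gsl (length \<Gamma>)) = \<Gamma>"
  by (rule nth_equalityI) (auto simp: gsl_def mks_def)

lemma set_mks: "set \<Gamma> = mks \<Gamma> s ` set (gsl (length \<Gamma>))"
proof -
  have "set \<Gamma> = set (map (subst (mks \<Gamma> s)) (map Var (gsl (length \<Gamma>))))" using map_mks by metis
  then show ?thesis by auto
qed

lemma subst_mks_small: "vars X \<subseteq> {..<10} \<Longrightarrow> subst (mks \<Gamma> s) X = subst s X"
  by (rule subst_cong) (auto simp: mks_def)

lemma mks_small: "y < 10 \<Longrightarrow> mks \<Gamma> s y = s y" by (simp add: mks_def)

lemma kal2:
  assumes R: "der L0 (okC C) (I P1 (I P2 Q))" and dnf: "\<not> has_dn (I P1 (I P2 Q))"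
    and small: "vars (I P1 (I P2 Q)) \<subseteq> {..<10}" and vQ: "vars Q \<subseteq> vars P1 \<union> vars P2"
    and m1: "der L0 (okC C) (ctx \<Gamma> (subst s P1))" and m2: "der L0 (okC C) (ctx \<Gamma> (subst s P2))"
    and H: "\<forall>x\<in>vars P1. vars (s x) \<subseteq> (\<Union>l\<in>set \<Gamma>. vars l) \<union> (\<Union>z\<in>vars P1 \<inter> vars P2. vars (s z))"
    and ok: "okC C (ctx \<Gamma> (subst s Q))"
  shows "der L0 (okC C) (ctx \<Gamma> (subst s Q))"
proof -
  let ?gs = "gsl (length \<Gamma>)"
  let ?G = "map Var ?gs"
  let ?\<sigma> = "mks \<Gamma> s"
  have dg: "distinct ?gs" by (simp add: gsl_def)
  have dj: "set ?gs \<inter> vars (I P1 (I P2 Q)) = {}" using small by (auto simp: gsl_def)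
  have LR: "der L0 (okC C) (I (ctx ?G P1) (I (ctx ?G P2) (ctx ?G Q)))"
    using der_lift2[OF R dnf dg dj] by (simp add: lift2f_def)
  have sc: "\<And>X. vars X \<subseteq> {..<10} \<Longrightarrow> subst ?\<sigma> (ctx ?G X) = ctx \<Gamma> (subst s X)"
    by (simp add: subst_ctx map_mks' subst_mks_small)
  have s1: "subst ?\<sigma> (ctx ?G P1) = ctx \<Gamma> (subst s P1)" using small by (intro sc) auto
  have s2: "subst ?\<sigma> (ctx ?G P2) = ctx \<Gamma> (subst s P2)" using small by (intro sc) auto
  have sQ: "subst ?\<sigma> (ctx ?G Q) = ctx \<Gamma> (subst s Q)" using small by (intro sc) auto
  have vG: "\<And>X. vars (ctx ?G X) = set ?gs \<union> vars X" by (auto simp: vars_ctx)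
  have gs10: "\<And>z. z \<in> set ?gs \<Longrightarrow> 10 \<le> z" by (auto simp: gsl_def)
  have "der L0 (okC C) (subst ?\<sigma> (ctx ?G Q))"
  proof (rule der_two[OF LR])
    show "der L0 (okC C) (subst ?\<sigma> (ctx ?G P1))" using m1 s1 by simp
    show "der L0 (okC C) (subst ?\<sigma> (ctx ?G P2))" using m2 s2 by simp
    show "vars (ctx ?G Q) \<subseteq> vars (ctx ?G P1) \<union> vars (ctx ?G P2)" using vQ by (auto simp: vG)
    show "\<forall>x\<in>vars (ctx ?G P1). vars (?\<sigma> x) \<inter> vars (subst ?\<sigma> (ctx ?G P2))
            \<subseteq> (\<Union>z\<in>vars (ctx ?G P1) \<inter> vars (ctx ?G P2). vars (?\<sigma> z))"
    proof
      fix x assume x: "x \<in> vars (ctx ?G P1)"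
      have "vars (?\<sigma> x) \<subseteq> (\<Union>z\<in>vars (ctx ?G P1) \<inter> vars (ctx ?G P2). vars (?\<sigma> z))"
      proof (cases "x \<in> set ?gs")
        case True then show ?thesis by (auto simp: vG)
      next
        case False
        then have xP: "x \<in> vars P1" using x vG by auto
        then have x10: "x < 10" using small by auto
        have "vars (?\<sigma> x) = vars (s x)" using x10 by (simp add: mks_small)
        also have "\<dots> \<subseteq> (\<Union>l\<in>set \<Gamma>. vars l) \<union> (\<Union>z\<in>vars P1 \<inter> vars P2. vars (s z))" using H xP by blast
        also have "\<dots> \<subseteq> (\<Union>z\<in>vars (ctx ?G P1) \<inter> vars (ctx ?G P2). vars (?\<sigma> z))"
        proof
          fix w assume "w \<in> (\<Union>l\<in>set \<Gamma>. vars l) \<union> (\<Union>z\<in>vars P1 \<inter> vars P2. vars (s z))"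
          then show "w \<in> (\<Union>z\<in>vars (ctx ?G P1) \<inter> vars (ctx ?G P2). vars (?\<sigma> z))"
          proof
            assume "w \<in> (\<Union>l\<in>set \<Gamma>. vars l)"
            then obtain z where "z \<in> set ?gs" "w \<in> vars (?\<sigma> z)" using set_mks[of \<Gamma> s] by auto
            then show ?thesis by (auto simp: vG)
          next
            assume "w \<in> (\<Union>z\<in>vars P1 \<inter> vars P2. vars (s z))"
            then obtain z where z: "z \<in> vars P1" "z \<in> vars P2" "w \<in> vars (s z)" by auto
            then have "z < 10" using small by auto
            then show ?thesis using z by (auto simp: vG mks_small intro!: bexI[of _ z])
          qed
        qed
        finally show ?thesis .
      qed
      then show "vars (?\<sigma> x) \<inter> vars (subst ?\<sigma> (ctx ?G P2)) \<subseteq> (\<Union>z\<in>vars (ctx ?G P1) \<inter> vars (ctx ?G P2). vars (?\<sigma> z))"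
        by blast
    qed
    show "\<And>X Y. okC C X \<Longrightarrow> variant X Y \<Longrightarrow> okC C Y" by (rule okC_variant)
    show "okC C (subst \<theta> (I (ctx ?G P2) (ctx ?G Q)))"
      if h1: "\<And>y. y \<in> vars (ctx ?G P1) \<Longrightarrow> \<theta> y = ?\<sigma> y" and h2: "\<And>y. y \<notin> vars (ctx ?G P1) \<Longrightarrow> \<exists>v. \<theta> y = Var v"
      for \<theta>
    proof (rule okC_inst)
      show "\<not> has_dn (I (ctx ?G P2) (ctx ?G Q))" using dnf by (simp add: hasdn_ctx)
      show "okC C (subst ?\<sigma> (I (ctx ?G P2) (ctx ?G Q)))" using der_ok[OF m2] ok s2 sQ by simp
      show "\<forall>y\<in>vars (I (ctx ?G P2) (ctx ?G Q)). \<theta> y = ?\<sigma> y \<or> (\<exists>v. \<theta> y = Var v)"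
        using h1 h2 by blast
    qed
    show "okC C (subst ?\<sigma> (ctx ?G Q))" using ok sQ by simp
  qed
  then show ?thesis using sQ by simp
qed

lemma kal1:
  assumes R: "der L0 (okC C) (I P Q)" and dnf: "\<not> has_dn (I P Q)"
    and small: "vars (I P Q) \<subseteq> {..<10}" and vQ: "vars Q \<subseteq> vars P"
    and m1: "der L0 (okC C) (ctx \<Gamma> (subst s P))"
    and ok: "okC C (ctx \<Gamma> (subst s Q))"
  shows "der L0 (okC C) (ctx \<Gamma> (subst s Q))"
proof -
  let ?gs = "gsl (length \<Gamma>)"
  let ?G = "map Var ?gs"
  let ?\<sigma> = "mks \<Gamma> s"
  have dg: "distinct ?gs" by (simp add: gsl_def)
  have dj: "set ?gs \<inter> vars (I P Q) = {}" using small by (auto simp: gsl_def)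
  have LR: "der L0 (okC C) (I (ctx ?G P) (ctx ?G Q))"
    using der_lift1[OF R dnf dg dj] by (simp add: lift1f_def)
  have sc: "\<And>X. vars X \<subseteq> {..<10} \<Longrightarrow> subst ?\<sigma> (ctx ?G X) = ctx \<Gamma> (subst s X)"
    by (simp add: subst_ctx map_mks' subst_mks_small)
  have s1: "subst ?\<sigma> (ctx ?G P) = ctx \<Gamma> (subst s P)" using small by (intro sc) auto
  have sQ: "subst ?\<sigma> (ctx ?G Q) = ctx \<Gamma> (subst s Q)" using small by (intro sc) auto
  have "der L0 (okC C) (subst ?\<sigma> (ctx ?G Q))"
  proof (rule der_pinned[OF LR])
    show "der L0 (okC C) (subst ?\<sigma> (ctx ?G P))" using m1 s1 by simp
    show "vars (ctx ?G Q) \<subseteq> vars (ctx ?G P)" using vQ by (auto simp: vars_ctx)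
    show "okC C (subst ?\<sigma> (ctx ?G Q))" using ok sQ by simp
  qed
  then show ?thesis using sQ by simp
qed


definition lit :: "(nat \<Rightarrow> bool) \<Rightarrow> nat \<Rightarrow> form" where
  "lit v p = (if v p then Var p else N (Var p))"

lemma vars_lit[simp]: "vars (lit v p) = {p}" by (simp add: lit_def)
lemma hasdn_lit[simp]: "\<not> has_dn (lit v p)" by (simp add: lit_def)
lemma okC_lit[simp]: "okC C (lit v p)" by (simp add: dnfree_okC)

lemma okC_lits: "okC C (ctx (map (lit v) qs) X) \<longleftrightarrow> okC C X"
  by (simp add: okC_ctx)

lemma vars_lits: "(\<Union>l\<in>set (map (lit v) qs). vars l) = set qs" by auto

lemma der_idlit: "der L0 (okC C) (I (lit v p) (lit v p))"
proof (cases "v p")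
  case True
  have vF: "variant F4 (rename (\<lambda>_. p) F4)" by (rule variant_inj_on) (simp add: F4_def)
  have "der L0 (okC C) (rename (\<lambda>_. p) F4)" using der_variant[OF dF4 vF] okC_variant by blast
  then show ?thesis using True by (simp add: lit_def F4_def)
next
  case False
  have vF: "variant F59 (rename (\<lambda>_. p) F59)" by (rule variant_inj_on) (simp add: F59_def)
  have "der L0 (okC C) (rename (\<lambda>_. p) F59)" using der_variant[OF dF59 vF] okC_variant by blast
  then show ?thesis using False by (simp add: lit_def F59_def)
qed

lemma der_wk_in:
  assumes d: "der L0 (okC C) (I l X)" and q: "q \<notin> vars (I l X)" and ok: "okC C (I l X)"
  shows "der L0 (okC C) (I l (I (lit v q) X))"
proof -
  define \<sigma> where "\<sigma> = (\<lambda>y::nat. if y = 0 then l else if y = 1 then X else Var q)"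
  let ?A = "I (Var 0) (Var 1)"
  have eA: "subst \<sigma> ?A = I l X" by (simp add: \<sigma>_def)
  show ?thesis
  proof (cases "v q")
    case True
    let ?B = "I (Var 0) (I (Var 2) (Var 1))"
    have L: "der L0 (okC C) (I ?A ?B)" using dF63 by (simp add: F63_def)
    have "der L0 (okC C) (subst \<sigma> ?B)"
    proof (rule der_fresh[OF L])
      show "der L0 (okC C) (subst \<sigma> ?A)" using d eA by simp
      show "\<forall>x\<in>vars ?B - vars ?A. \<exists>v. \<sigma> x = Var v \<and> v \<notin> vars (subst \<sigma> ?A)" using q eA by (auto simp: \<sigma>_def)
      show "inj_on \<sigma> (vars ?B - vars ?A)" by (rule inj_onI) auto
      show "\<And>X Y. okC C X \<Longrightarrow> variant X Y \<Longrightarrow> okC C Y" by (rule okC_variant)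
      show "okC C (subst \<sigma> ?B)" using ok by (simp add: \<sigma>_def)
    qed
    then show ?thesis using True by (simp add: \<sigma>_def lit_def)
  next
    case False
    let ?B = "I (Var 0) (I (N (Var 2)) (Var 1))"
    have L: "der L0 (okC C) (I ?A ?B)" using dF69 by (simp add: F69_def)
    have "der L0 (okC C) (subst \<sigma> ?B)"
    proof (rule der_fresh[OF L])
      show "der L0 (okC C) (subst \<sigma> ?A)" using d eA by simp
      show "\<forall>x\<in>vars ?B - vars ?A. \<exists>v. \<sigma> x = Var v \<and> v \<notin> vars (subst \<sigma> ?A)" using q eA by (auto simp: \<sigma>_def)
      show "inj_on \<sigma> (vars ?B - vars ?A)" by (rule inj_onI) auto
      show "\<And>X Y. okC C X \<Longrightarrow> variant X Y \<Longrightarrow> okC C Y" by (rule okC_variant)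
      show "okC C (subst \<sigma> ?B)" using ok by (simp add: \<sigma>_def okC_N)
    qed
    then show ?thesis using False by (simp add: \<sigma>_def lit_def)
  qed
qed

lemma der_wk_pre:
  assumes d: "der L0 (okC C) X" and q: "q \<notin> vars X" and ok: "okC C X"
  shows "der L0 (okC C) (I (lit v q) X)"
proof -
  define \<sigma> where "\<sigma> = (\<lambda>y::nat. if y = 0 then X else Var q)"
  let ?A = "Var 0"
  have eA: "subst \<sigma> ?A = X" by (simp add: \<sigma>_def)
  show ?thesis
  proof (cases "v q")
    case True
    let ?B = "I (Var 1) (Var 0)"
    have L: "der L0 (okC C) (I ?A ?B)" using dF22 by (simp add: F22_def)
    have "der L0 (okC C) (subst \<sigma> ?B)"
    proof (rule der_fresh[OF L])
      show "der L0 (okC C) (subst \<sigma> ?A)" using d eA by simp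
      show "\<forall>x\<in>vars ?B - vars ?A. \<exists>v. \<sigma> x = Var v \<and> v \<notin> vars (subst \<sigma> ?A)" using q eA by (auto simp: \<sigma>_def)
      show "inj_on \<sigma> (vars ?B - vars ?A)" by (rule inj_onI) auto
      show "\<And>X Y. okC C X \<Longrightarrow> variant X Y \<Longrightarrow> okC C Y" by (rule okC_variant)
      show "okC C (subst \<sigma> ?B)" using ok by (simp add: \<sigma>_def)
    qed
    then show ?thesis using True by (simp add: \<sigma>_def lit_def)
  next
    case False
    let ?B = "I (N (Var 1)) (Var 0)"
    have L: "der L0 (okC C) (I ?A ?B)" using dF62 by (simp add: F62_def)
    have "der L0 (okC C) (subst \<sigma> ?B)"
    proof (rule der_fresh[OF L])
      show "der L0 (okC C) (subst \<sigma> ?A)" using d eA by simp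
      show "\<forall>x\<in>vars ?B - vars ?A. \<exists>v. \<sigma> x = Var v \<and> v \<notin> vars (subst \<sigma> ?A)" using q eA by (auto simp: \<sigma>_def)
      show "inj_on \<sigma> (vars ?B - vars ?A)" by (rule inj_onI) auto
      show "\<And>X Y. okC C X \<Longrightarrow> variant X Y \<Longrightarrow> okC C Y" by (rule okC_variant)
      show "okC C (subst \<sigma> ?B)" using ok by (simp add: \<sigma>_def okC_N)
    qed
    then show ?thesis using False by (simp add: \<sigma>_def lit_def)
  qed
qed

lemma der_inner: "distinct qs \<Longrightarrow> p \<notin> set qs \<Longrightarrow> der L0 (okC C) (I (lit v p) (ctx (map (lit v) qs) (lit v p)))"
proof (induction qs)
  case Nil then show ?case by (simp add: der_idlit)
next
  case (Cons q qs)
  have IH: "der L0 (okC C) (I (lit v p) (ctx (map (lit v) qs) (lit v p)))" using Cons by auto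
  have "q \<notin> vars (I (lit v p) (ctx (map (lit v) qs) (lit v p)))" using Cons.prems by (auto simp: vars_ctx)
  moreover have "okC C (I (lit v p) (ctx (map (lit v) qs) (lit v p)))" by (simp add: okC_lits)
  ultimately show ?case using der_wk_in[OF IH] by simp
qed

lemma der_prefix: "distinct qs \<Longrightarrow> set qs \<inter> vars X = {} \<Longrightarrow> okC C X \<Longrightarrow> der L0 (okC C) X
   \<Longrightarrow> der L0 (okC C) (ctx (map (lit v) qs) X)"
proof (induction qs)
  case Nil then show ?case by simp
next
  case (Cons q qs)
  have IH: "der L0 (okC C) (ctx (map (lit v) qs) X)" using Cons by auto
  have "q \<notin> vars (ctx (map (lit v) qs) X)" using Cons.prems by (auto simp: vars_ctx)
  moreover have "okC C (ctx (map (lit v) qs) X)" using Cons.prems by (simp add: okC_lits)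
  ultimately show ?case using der_wk_pre[OF IH] by simp
qed

lemma der_base_lit:
  assumes "distinct ps" "i < length ps"
  shows "der L0 (okC C) (ctx (map (lit v) ps) (lit v (ps ! i)))"
proof -
  let ?p = "ps ! i" let ?pre = "take i ps" let ?suf = "drop (Suc i) ps"
  have ps: "ps = ?pre @ ?p # ?suf" using assms(2) by (simp add: id_take_nth_drop)
  have d: "distinct (?pre @ ?p # ?suf)" using assms(1) ps by metis
  have inner: "der L0 (okC C) (I (lit v ?p) (ctx (map (lit v) ?suf) (lit v ?p)))"
    using d by (intro der_inner) auto
  have "der L0 (okC C) (ctx (map (lit v) ?pre) (I (lit v ?p) (ctx (map (lit v) ?suf) (lit v ?p))))"
    using d inner by (intro der_prefix) (auto simp: vars_ctx okC_lits)
  moreover have "ctx (map (lit v) ps) (lit v ?p) = ctx (map (lit v) ?pre) (I (lit v ?p) (ctx (map (lit v) ?suf) (lit v ?p)))"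
    by (subst ps) (simp add: ctx_append)
  ultimately show ?thesis by simp
qed

definition Wv :: "(nat \<Rightarrow> bool) \<Rightarrow> form \<Rightarrow> form" where
  "Wv v A = (if eval v A then A else (case A of N s \<Rightarrow> s | _ \<Rightarrow> N A))"

lemma Wv_cases:
  "(eval v a \<and> Wv v a = a) \<or> (\<not> eval v a \<and> (\<forall>t. a \<noteq> N t) \<and> Wv v a = N a)
   \<or> (\<exists>q. \<not> eval v a \<and> a = N q \<and> Wv v a = q)"
  by (cases a) (auto simp: Wv_def)

lemma sub_N: "N s \<in> subforms C \<Longrightarrow> s \<in> subforms C"
  using subforms_trans[of s "N s" C] by (simp add: subforms_self)
lemma sub_I1: "I a b \<in> subforms C \<Longrightarrow> a \<in> subforms C"
  using subforms_trans[of a "I a b" C] by (simp add: subforms_self)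
lemma sub_I2: "I a b \<in> subforms C \<Longrightarrow> b \<in> subforms C"
  using subforms_trans[of b "I a b" C] by (simp add: subforms_self)
lemma sub_vars: "A \<in> subforms C \<Longrightarrow> vars A \<subseteq> vars C"
  by (induct C) auto


lemma kalI:
  assumes R: "der L0 (okC C) (I P1 (I P2 Q))" and dn: "\<not> has_dn (I P1 (I P2 Q))"
    and v01: "vars (I P1 (I P2 Q)) \<subseteq> {0,1}" and vQ: "vars Q \<subseteq> vars P1 \<union> vars P2"
    and m1: "der L0 (okC C) (ctx \<Gamma> (subst (\<lambda>y. if y = 0 then X0 else X1) P1))"
    and m2: "der L0 (okC C) (ctx \<Gamma> (subst (\<lambda>y. if y = 0 then X0 else X1) P2))"
    and vX0: "vars X0 \<subseteq> (\<Union>l\<in>set \<Gamma>. vars l)" and vX1: "vars X1 \<subseteq> (\<Union>l\<in>set \<Gamma>. vars l)"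
    and ok: "okC C (ctx \<Gamma> (subst (\<lambda>y. if y = 0 then X0 else X1) Q))"
  shows "der L0 (okC C) (ctx \<Gamma> (subst (\<lambda>y. if y = 0 then X0 else X1) Q))"
proof (rule kal2[OF R dn _ vQ m1 m2 _ ok])
  show "vars (I P1 (I P2 Q)) \<subseteq> {..<10}" using v01 by auto
  show "\<forall>x\<in>vars P1. vars (if x = 0 then X0 else X1) \<subseteq> (\<Union>l\<in>set \<Gamma>. vars l) \<union> (\<Union>z\<in>vars P1 \<inter> vars P2. vars (if z = 0 then X0 else X1))"
    using vX0 vX1 by auto
qed

lemma R1d: "der L0 (okC C) (I (Var 0) (I (Var 1) (I (Var 0) (Var 1))))" using dF80 by (simp add: F80_def)
lemma R2d: "der L0 (okC C) (I (Var 0) (I (N (Var 1)) (N (I (Var 0) (Var 1)))))" using dF42 by (simp add: F42_def)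
lemma R3d: "der L0 (okC C) (I (Var 0) (I (Var 1) (N (I (Var 0) (N (Var 1))))))" using dF46 by (simp add: F46_def)
lemma R4d: "der L0 (okC C) (I (N (Var 0)) (I (Var 1) (I (Var 0) (Var 1))))" using dF81 by (simp add: F81_def)
lemma R5d: "der L0 (okC C) (I (N (Var 0)) (I (N (Var 1)) (I (Var 0) (Var 1))))" using dF87 by (simp add: F87_def)
lemma R6d: "der L0 (okC C) (I (N (Var 0)) (I (Var 1) (I (Var 0) (N (Var 1)))))" using dF92 by (simp add: F92_def)
lemma R7d: "der L0 (okC C) (I (Var 0) (I (Var 1) (I (N (Var 0)) (Var 1))))" using dF93 by (simp add: F93_def)
lemma R8d: "der L0 (okC C) (I (Var 0) (I (N (Var 1)) (I (N (Var 0)) (Var 1))))" using dF94 by (simp add: F94_def)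
lemma R9d: "der L0 (okC C) (I (Var 0) (I (Var 1) (I (N (Var 0)) (N (Var 1)))))" using dF95 by (simp add: F95_def)
lemma R11d: "der L0 (okC C) (I (Var 0) (I (N (Var 0)) (N (Var 0))))" using dF88 by (simp add: F88_def)
lemma R12d: "der L0 (okC C) (I (I (Var 0) (N (Var 1))) (I (Var 1) (N (Var 0))))" using dF45 by (simp add: F45_def)
lemma E0d: "der L0 (okC C) (I (I (Var 0) (Var 1)) (I (I (N (Var 0)) (Var 1)) (Var 1)))" using dF49 by (simp add: F49_def)

lemma kalmar:
  assumes dps: "distinct ps" and sps: "set ps = vars C"
  shows "A \<in> subforms C \<Longrightarrow> der L0 (okC C) (ctx (map (lit v) ps) (Wv v A))"
proof (induction A)
  case (Var p)
  have "p \<in> set ps" using sub_vars[OF Var.prems] sps by auto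
  then obtain i where i: "i < length ps" "ps ! i = p" by (metis in_set_conv_nth)
  have "Wv v (Var p) = lit v p" by (simp add: Wv_def lit_def)
  then show ?case using der_base_lit[OF dps i(1), of C v] i(2) by simp
next
  case (N s)
  let ?G = "map (lit v) ps"
  have sC: "s \<in> subforms C" using sub_N[OF N.prems] .
  have IH: "der L0 (okC C) (ctx ?G (Wv v s))" using N.IH[OF sC] .
  have vG: "\<And>x. x \<in> subforms C \<Longrightarrow> vars x \<subseteq> (\<Union>l\<in>set ?G. vars l)"
    using sub_vars sps by (auto simp: vars_lits)
  show ?case
  proof (cases "eval v s")
    case True
    then have "Wv v (N s) = s" "Wv v s = s" by (simp_all add: Wv_def)
    then show ?thesis using IH by simp
  next
    case False
    then have WN: "Wv v (N s) = N s" by (simp add: Wv_def)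
    show ?thesis
    proof (cases "\<exists>r. s = N r")
      case True
      then obtain r where r: "s = N r" by auto
      have Ws: "Wv v s = r" using False r by (simp add: Wv_def)
      have rsub: "r \<in> subforms C" "N r \<in> subforms C" "N (N r) \<in> subforms C" using N.prems r sub_N by auto
      have step1: "der L0 (okC C) (ctx ?G (subst (\<lambda>y. r) (I (N (Var 0)) (N (Var 0)))))"
      proof (rule kal1[OF R11d])
        show "der L0 (okC C) (ctx ?G (subst (\<lambda>y. r) (Var 0)))" using IH Ws by simp
        show "okC C (ctx ?G (subst (\<lambda>y. r) (I (N (Var 0)) (N (Var 0)))))"
          using rsub by (simp add: okC_lits okC_of_sub)
      qed auto
      have step2: "der L0 (okC C) (ctx ?G (subst (\<lambda>y. if y = 0 then N r else r) (N (Var 0))))"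
      proof (rule kalI[OF R12d])
        show "der L0 (okC C) (ctx ?G (subst (\<lambda>y. if y = 0 then N r else r) (I (Var 0) (N (Var 1)))))"
          using step1 by simp
        show "der L0 (okC C) (ctx ?G (subst (\<lambda>y. if y = 0 then N r else r) (Var 1)))" using IH Ws by simp
        show "vars (N r) \<subseteq> (\<Union>l\<in>set ?G. vars l)" using vG[OF rsub(2)] .
        show "vars r \<subseteq> (\<Union>l\<in>set ?G. vars l)" using vG[OF rsub(1)] .
        show "okC C (ctx ?G (subst (\<lambda>y. if y = 0 then N r else r) (N (Var 0))))"
          using rsub by (simp add: okC_lits okC_of_sub)
      qed auto
      then show ?thesis using WN r by simp
    next
      case nn: False
      then have "Wv v s = N s" using False by (cases s) (auto simp: Wv_def)
      then show ?thesis using IH WN by simp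
    qed
  qed
next
  case (I a b)
  let ?G = "map (lit v) ps"
  have aC: "a \<in> subforms C" using sub_I1[OF I.prems] .
  have bC: "b \<in> subforms C" using sub_I2[OF I.prems] .
  have IHa: "der L0 (okC C) (ctx ?G (Wv v a))" using I.IH(1)[OF aC] .
  have IHb: "der L0 (okC C) (ctx ?G (Wv v b))" using I.IH(2)[OF bC] .
  have vG: "\<And>x. x \<in> subforms C \<Longrightarrow> vars x \<subseteq> (\<Union>l\<in>set ?G. vars l)"
    using sub_vars sps by (auto simp: vars_lits)
  have okI: "okC C (ctx ?G (I a b))" using aC bC by (simp add: okC_lits okC_of_sub)
  have okNI: "okC C (ctx ?G (N (I a b)))" using aC bC by (simp add: okC_lits okC_of_sub okC_N)
  have WI: "Wv v (I a b) = (if eval v (I a b) then I a b else N (I a b))" by (simp add: Wv_def)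
  have ca: "(eval v a \<and> Wv v a = a) \<or> (\<not> eval v a \<and> (\<forall>t. a \<noteq> N t) \<and> Wv v a = N a)
     \<or> (\<exists>q. \<not> eval v a \<and> a = N q \<and> Wv v a = q)" by (rule Wv_cases)
  have cb: "(eval v b \<and> Wv v b = b) \<or> (\<not> eval v b \<and> (\<forall>t. b \<noteq> N t) \<and> Wv v b = N b)
     \<or> (\<exists>r. \<not> eval v b \<and> b = N r \<and> Wv v b = r)" by (rule Wv_cases)
  from ca show ?case
  proof (elim disjE exE conjE)
    assume ea: "eval v a" and Wa: "Wv v a = a"
    from cb show ?case
    proof (elim disjE exE conjE)
      assume eb: "eval v b" and Wb: "Wv v b = b"
      have "der L0 (okC C) (ctx ?G (subst (\<lambda>y. if y = 0 then a else b) (I (Var 0) (Var 1))))"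
        by (rule kalI[OF R1d]) (use IHa IHb Wa Wb vG[OF aC] vG[OF bC] okI in auto)
      then show ?case using WI ea eb by simp
    next
      assume eb: "\<not> eval v b" and nb: "\<forall>t. b \<noteq> N t" and Wb: "Wv v b = N b"
      have "der L0 (okC C) (ctx ?G (subst (\<lambda>y. if y = 0 then a else b) (N (I (Var 0) (Var 1)))))"
        by (rule kalI[OF R2d]) (use IHa IHb Wa Wb vG[OF aC] vG[OF bC] okNI in auto)
      then show ?case using WI ea eb by simp
    next
      fix r assume eb: "\<not> eval v b" and br: "b = N r" and Wb: "Wv v b = r"
      have rC: "r \<in> subforms C" using bC br sub_N by auto
      have "der L0 (okC C) (ctx ?G (subst (\<lambda>y. if y = 0 then a else r) (N (I (Var 0) (N (Var 1))))))"
        by (rule kalI[OF R3d]) (use IHa IHb Wa Wb vG[OF aC] vG[OF rC] okNI br in auto)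
      then show ?case using WI ea eb br by simp
    qed
  next
    assume ea: "\<not> eval v a" and na: "\<forall>t. a \<noteq> N t" and Wa: "Wv v a = N a"
    from cb show ?case
    proof (elim disjE exE conjE)
      assume eb: "eval v b" and Wb: "Wv v b = b"
      have "der L0 (okC C) (ctx ?G (subst (\<lambda>y. if y = 0 then a else b) (I (Var 0) (Var 1))))"
        by (rule kalI[OF R4d]) (use IHa IHb Wa Wb vG[OF aC] vG[OF bC] okI in auto)
      then show ?case using WI ea eb by simp
    next
      assume eb: "\<not> eval v b" and nb: "\<forall>t. b \<noteq> N t" and Wb: "Wv v b = N b"
      have "der L0 (okC C) (ctx ?G (subst (\<lambda>y. if y = 0 then a else b) (I (Var 0) (Var 1))))"
        by (rule kalI[OF R5d]) (use IHa IHb Wa Wb vG[OF aC] vG[OF bC] okI in auto)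
      then show ?case using WI ea eb by simp
    next
      fix r assume eb: "\<not> eval v b" and br: "b = N r" and Wb: "Wv v b = r"
      have rC: "r \<in> subforms C" using bC br sub_N by auto
      have "der L0 (okC C) (ctx ?G (subst (\<lambda>y. if y = 0 then a else r) (I (Var 0) (N (Var 1)))))"
        by (rule kalI[OF R6d]) (use IHa IHb Wa Wb vG[OF aC] vG[OF rC] okI br in auto)
      then show ?case using WI ea eb br by simp
    qed
  next
    fix q assume ea: "\<not> eval v a" and aq: "a = N q" and Wa: "Wv v a = q"
    have qC: "q \<in> subforms C" using aC aq sub_N by auto
    from cb show ?case
    proof (elim disjE exE conjE)
      assume eb: "eval v b" and Wb: "Wv v b = b"
      have "der L0 (okC C) (ctx ?G (subst (\<lambda>y. if y = 0 then q else b) (I (N (Var 0)) (Var 1))))"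
        by (rule kalI[OF R7d]) (use IHa IHb Wa Wb vG[OF qC] vG[OF bC] okI aq in auto)
      then show ?case using WI ea eb aq by simp
    next
      assume eb: "\<not> eval v b" and nb: "\<forall>t. b \<noteq> N t" and Wb: "Wv v b = N b"
      have "der L0 (okC C) (ctx ?G (subst (\<lambda>y. if y = 0 then q else b) (I (N (Var 0)) (Var 1))))"
        by (rule kalI[OF R8d]) (use IHa IHb Wa Wb vG[OF qC] vG[OF bC] okI aq in auto)
      then show ?case using WI ea eb aq by simp
    next
      fix r assume eb: "\<not> eval v b" and br: "b = N r" and Wb: "Wv v b = r"
      have rC: "r \<in> subforms C" using bC br sub_N by auto
      have "der L0 (okC C) (ctx ?G (subst (\<lambda>y. if y = 0 then q else r) (I (N (Var 0)) (N (Var 1)))))"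
        by (rule kalI[OF R9d]) (use IHa IHb Wa Wb vG[OF qC] vG[OF rC] okI aq br in auto)
      then show ?case using WI ea eb aq br by simp
    qed
  qed
qed

lemma elim_hyps:
  assumes dps: "distinct ps" and sps: "set ps = vars C" and taut: "tautology C"
  shows "ps = qs @ rs \<Longrightarrow> der L0 (okC C) (ctx (map (lit v) qs) C)"
proof (induction rs arbitrary: qs v)
  case Nil
  then have "qs = ps" by simp
  moreover have "Wv v C = C" using taut by (simp add: Wv_def tautology_def)
  ultimately show ?case using kalmar[OF dps sps subforms_self[of C], of v] by simp
next
  case (Cons p rs)
  have ps': "ps = (qs @ [p]) @ rs" using Cons.prems by simp
  have pq: "p \<notin> set qs" using dps Cons.prems by auto
  let ?v1 = "v(p := True)" let ?v0 = "v(p := False)"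
  have m1: "map (lit ?v1) qs = map (lit v) qs" using pq by (auto simp: lit_def)
  have m0: "map (lit ?v0) qs = map (lit v) qs" using pq by (auto simp: lit_def)
  have l1: "lit ?v1 p = Var p" by (simp add: lit_def)
  have l0: "lit ?v0 p = N (Var p)" by (simp add: lit_def)
  have d1: "der L0 (okC C) (ctx (map (lit v) qs) (I (Var p) C))"
    using Cons.IH[OF ps', of ?v1] by (simp only: ctx_append m1 l1 map_append list.map ctx.simps)
  have d0: "der L0 (okC C) (ctx (map (lit v) qs) (I (N (Var p)) C))"
    using Cons.IH[OF ps', of ?v0] by (simp only: ctx_append m0 l0 map_append list.map ctx.simps)
  have pC: "p \<in> vars C" using sps Cons.prems by auto
  have "der L0 (okC C) (ctx (map (lit v) qs) (subst (\<lambda>y. if y = 0 then Var p else C) (Var 1)))"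
  proof (rule kal2[OF E0d])
    show "der L0 (okC C) (ctx (map (lit v) qs) (subst (\<lambda>y. if y = 0 then Var p else C) (I (Var 0) (Var 1))))"
      using d1 by simp
    show "der L0 (okC C) (ctx (map (lit v) qs) (subst (\<lambda>y. if y = 0 then Var p else C) (I (N (Var 0)) (Var 1))))"
      using d0 by simp
    show "okC C (ctx (map (lit v) qs) (subst (\<lambda>y. if y = 0 then Var p else C) (Var 1)))"
      by (simp add: okC_lits okC_of_sub subforms_self)
    show "\<forall>x\<in>vars (I (Var 0) (Var 1)). vars (if x = 0 then Var p else C) \<subseteq> (\<Union>l\<in>set (map (lit v) qs). vars l) \<union>
       (\<Union>z\<in>vars (I (Var 0) (Var 1)) \<inter> vars (I (N (Var 0)) (Var 1)). vars (if z = 0 then Var p else C))"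
      by auto
  qed (auto)
  then show ?case by simp
qed


lemma eval_dn_replace: "eval v (dn_replace S t) = eval v t"
  by (induction S t rule: dn_replace.induct) (auto split: form.splits)

lemma tautology_dn_replace: "tautology B \<Longrightarrow> tautology (dn_replace S B)"
  by (simp add: tautology_def eval_dn_replace)

lemma der_L0_C: "tautology C \<Longrightarrow> der L0 (okC C) C"
proof -
  assume t: "tautology C"
  let ?ps = "sorted_list_of_set (vars C)"
  have d: "distinct ?ps" and s: "set ?ps = vars C" by auto
  show ?thesis using elim_hyps[OF d s t, of "[]" ?ps] by simp
qed

lemma der_T_from_dnfree:
  assumes "\<exists>ps. proof_of T ps L \<and> dn_free_proof T ps"
  shows "der T (okC C) L"
proof -
  obtain ps where ps: "proof_of T ps L" "dn_free_proof T ps" using assms by blast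
  have dd: "\<forall>A\<in>deduced_steps T ps. okC C A" using ps(2) unfolding dn_free_proof_def by (auto intro: dnfree_okC)
  have ip: "is_proof T ps" "length ps - 1 < length ps" using ps(1) unfolding proof_of_def by auto
  have "der T (okC C) (ps ! (length ps - 1))" by (rule proof_lines_der[OF ip(1) dd ip(2)])
  moreover have "ps ! (length ps - 1) = L" using ps(1) unfolding proof_of_def by (metis last_conv_nth)
  ultimately show ?thesis by simp
qed

theorem corollary1:
  fixes T :: "form set"
  assumes "\<forall>A. provable T A \<longleftrightarrow> tautology A"
    and "\<exists>ps. proof_of T ps L1 \<and> dn_free_proof T ps"
    and "\<exists>ps. proof_of T ps L2 \<and> dn_free_proof T ps"
    and "\<exists>ps. proof_of T ps L3 \<and> dn_free_proof T ps"
  shows "strong_dn_elim T"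
  unfolding strong_dn_elim_def
proof (intro allI impI)
  fix B S assume h: "provable T B \<and> S \<subseteq> {u \<in> subforms B. is_dn u}"
  let ?C = "dn_replace S B"
  have "tautology B" using assms(1) h by blast
  then have tC: "tautology ?C" by (rule tautology_dn_replace)
  have d0: "der L0 (okC ?C) ?C" using der_L0_C[OF tC] .
  have Ls: "der T (okC ?C) L1" "der T (okC ?C) L2" "der T (okC ?C) L3"
    using der_T_from_dnfree assms(2-4) by blast+
  have "der T (okC ?C) ?C"
  proof (rule der_base[OF d0])
    fix A assume "is_axiom L0 A"
    then obtain a where a: "a \<in> L0" "variant a A" unfolding is_axiom_def by blast
    have da: "der T (okC ?C) a" using a(1) Ls unfolding L0_def by auto
    show "der T (okC ?C) A" using der_variant[OF da a(2)] okC_variant by blast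
  qed
  then obtain ps where "proof_of T ps ?C" "\<forall>A\<in>deduced_steps T ps. okC ?C A" using der_proof by blast
  then show "\<exists>ps. proof_of T ps ?C \<and> (\<forall>A\<in>deduced_steps T ps. \<forall>u\<in>subforms A. is_dn u \<longrightarrow> (\<exists>w\<in>subforms ?C. variant u w))"
    unfolding okC_def by blast
qed


end
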